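(* If $G$ and $H$ are 1-homogeneous graphs, then \[\chi_{vec}(G \times H) = \min\{\chi_{vec}(G), \chi_{vec}(H)\}.\]
   Context: Graphs are finite, simple and undirected. A graph $G$ is 1-homogeneous if (1) for every $k$, the number of closed walks of length $k$ starting at a vertex $u$ does not depend on $u$, and (2) for every $k$, the number of walks of length $k$ from $u$ to $v$, for adjacent $u,v$, does not depend on the edge $uv$. The categorical product $G\times H$ has vertex set $V(G)\times V(H)$, with $(u_1,v_1)\sim(u_2,v_2)$ iff $u_1\sim u_2$ and $v_1\sim v_2$. For a real $k>1$, a vector $k$-coloring of $G$ is a map $\varphi$ from $V(G)$ to the unit sphere of some $\mathbb{R}^d$ with $\varphi(u)^T\varphi(v)\le -\frac{1}{k-1}$ whenever $u\sim v$; the vector chromatic number $\chi_{vec}(G)$ is the smallest such $k$ (equal to $1$ for graphs with no edges). *)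

theory Defs
  imports Complex_Main
begin

definition simple_graph :: "'a set \<Rightarrow> ('a \<Rightarrow> 'a \<Rightarrow> bool) \<Rightarrow> bool" where
  "simple_graph V E \<longleftrightarrow> finite V \<and> (\<forall>u v. E u v \<longrightarrow> u \<in> V \<and> v \<in> V)
     \<and> (\<forall>u v. E u v \<longrightarrow> E v u) \<and> (\<forall>u. \<not> E u u)"

fun walks :: "'a set \<Rightarrow> ('a \<Rightarrow> 'a \<Rightarrow> bool) \<Rightarrow> nat \<Rightarrow> 'a \<Rightarrow> 'a \<Rightarrow> nat" where
  "walks V E 0 u v = (if u = v then 1 else 0)"
| "walks V E (Suc k) u v = (\<Sum>w\<in>{w\<in>V. E u w}. walks V E k w v)"

definition one_homogeneous :: "'a set \<Rightarrow> ('a \<Rightarrow> 'a \<Rightarrow> bool) \<Rightarrow> bool" where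
  "one_homogeneous V E \<longleftrightarrow>
     (\<forall>k. \<forall>u\<in>V. \<forall>u'\<in>V. walks V E k u u = walks V E k u' u') \<and>
     (\<forall>k u v u' v'. E u v \<longrightarrow> E u' v' \<longrightarrow> walks V E k u v = walks V E k u' v')"

definition cat_prod_verts :: "'a set \<Rightarrow> 'b set \<Rightarrow> ('a \<times> 'b) set" where
  "cat_prod_verts V W = V \<times> W"

definition cat_prod_edges ::
  "('a \<Rightarrow> 'a \<Rightarrow> bool) \<Rightarrow> ('b \<Rightarrow> 'b \<Rightarrow> bool) \<Rightarrow> ('a \<times> 'b) \<Rightarrow> ('a \<times> 'b) \<Rightarrow> bool" where
  "cat_prod_edges E F p q \<longleftrightarrow> E (fst p) (fst q) \<and> F (snd p) (snd q)"

text \<open>Vectors in R^d are represented as functions nat \<Rightarrow> real, using coordinates 0..d-1.\<close>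

definition vec_inner :: "nat \<Rightarrow> (nat \<Rightarrow> real) \<Rightarrow> (nat \<Rightarrow> real) \<Rightarrow> real" where
  "vec_inner d x y = (\<Sum>i<d. x i * y i)"

definition vector_coloring ::
  "'a set \<Rightarrow> ('a \<Rightarrow> 'a \<Rightarrow> bool) \<Rightarrow> real \<Rightarrow> nat \<Rightarrow> ('a \<Rightarrow> nat \<Rightarrow> real) \<Rightarrow> bool" where
  "vector_coloring V E k d \<phi> \<longleftrightarrow>
     (\<forall>u\<in>V. vec_inner d (\<phi> u) (\<phi> u) = 1) \<and>
     (\<forall>u v. E u v \<longrightarrow> vec_inner d (\<phi> u) (\<phi> v) \<le> - 1 / (k - 1))"

definition vector_colorable :: "'a set \<Rightarrow> ('a \<Rightarrow> 'a \<Rightarrow> bool) \<Rightarrow> real \<Rightarrow> bool" where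
  "vector_colorable V E k \<longleftrightarrow> k > 1 \<and> (\<exists>d \<phi>. vector_coloring V E k d \<phi>)"

definition chi_vec :: "'a set \<Rightarrow> ('a \<Rightarrow> 'a \<Rightarrow> bool) \<Rightarrow> real" where
  "chi_vec V E = (if \<not> (\<exists>u v. E u v) then 1 else Inf {k. vector_colorable V E k})"

end

theory Submission
  imports Defs "HOL-Computational_Algebra.Polynomial" "HOL-Library.Function_Algebras"
begin

type_synonym 'a rmat = "'a \<Rightarrow> 'a \<Rightarrow> real"

definition mmul :: "'a set \<Rightarrow> 'a rmat \<Rightarrow> 'a rmat \<Rightarrow> 'a rmat" where
  "mmul V M N = (\<lambda>u v. if u \<in> V \<and> v \<in> V then (\<Sum>w\<in>V. M u w * N w v) else 0)"

definition mid :: "'a set \<Rightarrow> 'a rmat" where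
  "mid V = (\<lambda>u v. if u = v \<and> u \<in> V then 1 else 0)"

definition supp :: "'a set \<Rightarrow> 'a rmat \<Rightarrow> bool" where
  "supp V M \<longleftrightarrow> (\<forall>u v. u \<notin> V \<or> v \<notin> V \<longrightarrow> M u v = 0)"

definition msc :: "real \<Rightarrow> 'a rmat \<Rightarrow> 'a rmat" where
  "msc c M = (\<lambda>u v. c * M u v)"

fun mpow :: "'a set \<Rightarrow> 'a rmat \<Rightarrow> nat \<Rightarrow> 'a rmat" where
  "mpow V A 0 = mid V"
| "mpow V A (Suc k) = mmul V A (mpow V A k)"

definition peval :: "'a set \<Rightarrow> 'a rmat \<Rightarrow> real poly \<Rightarrow> 'a rmat" where
  "peval V A p = (\<Sum>i\<le>degree p. msc (coeff p i) (mpow V A i))"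

lemma sum_apply2: "(\<Sum>i\<in>I. f i) u v = (\<Sum>i\<in>I. (f i u v :: real))"
  by (induction I rule: infinite_finite_induct) auto

lemma minus_apply2: "((M::'a rmat) - N) u v = M u v - N u v"
  by simp

lemma msc_apply[simp]: "msc c M u v = c * M u v" by (simp add: msc_def)

lemma supp_D: "supp V M \<Longrightarrow> u \<notin> V \<or> v \<notin> V \<Longrightarrow> M u v = 0"
  unfolding supp_def by blast

lemma supp_mmul[simp]: "supp V (mmul V M N)" unfolding supp_def mmul_def by auto
lemma supp_mid[simp]: "supp V (mid V)" unfolding supp_def mid_def by auto
lemma supp_msc: "supp V M \<Longrightarrow> supp V (msc c M)" unfolding supp_def by auto
lemma supp_add: "supp V M \<Longrightarrow> supp V N \<Longrightarrow> supp V (M + N)" unfolding supp_def by auto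
lemma supp_diff: "supp V M \<Longrightarrow> supp V N \<Longrightarrow> supp V (M - N)" unfolding supp_def by auto
lemma supp_zero[simp]: "supp V 0" unfolding supp_def by auto
lemma supp_sum: "(\<And>i. i \<in> I \<Longrightarrow> supp V (f i)) \<Longrightarrow> supp V (\<Sum>i\<in>I. f i)"
  unfolding supp_def by (auto simp: sum_apply2 intro!: sum.neutral)
lemma supp_mpow[simp]: "supp V (mpow V A k)" by (cases k) auto
lemma supp_peval[simp]: "supp V (peval V A p)"
  unfolding peval_def by (intro supp_sum supp_msc supp_mpow)

lemma mmul_assoc:
  assumes "finite V"
  shows "mmul V (mmul V M N) P = mmul V M (mmul V N P)"
proof (intro ext)
  fix u v
  show "mmul V (mmul V M N) P u v = mmul V M (mmul V N P) u v"
  proof (cases "u \<in> V \<and> v \<in> V")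
    case True
    have "mmul V (mmul V M N) P u v = (\<Sum>w\<in>V. (\<Sum>x\<in>V. M u x * N x w) * P w v)"
      using True by (auto simp: mmul_def intro!: sum.cong)
    also have "\<dots> = (\<Sum>w\<in>V. \<Sum>x\<in>V. M u x * N x w * P w v)"
      by (simp add: sum_distrib_right)
    also have "\<dots> = (\<Sum>x\<in>V. \<Sum>w\<in>V. M u x * N x w * P w v)"
      by (rule sum.swap)
    also have "\<dots> = (\<Sum>x\<in>V. M u x * (\<Sum>w\<in>V. N x w * P w v))"
      by (simp add: sum_distrib_left mult.assoc)
    also have "\<dots> = mmul V M (mmul V N P) u v"
      using True by (auto simp: mmul_def intro!: sum.cong)
    finally show ?thesis .
  qed (auto simp: mmul_def)
qed

lemma mmul_add_left: "mmul V (M + N) P = mmul V M P + mmul V N P"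
  by (auto simp: mmul_def fun_eq_iff sum.distrib distrib_right)
lemma mmul_add_right: "mmul V P (M + N) = mmul V P M + mmul V P N"
  by (auto simp: mmul_def fun_eq_iff sum.distrib distrib_left)
lemma mmul_diff_left: "mmul V (M - N) P = mmul V M P - mmul V N P"
  by (auto simp: mmul_def fun_eq_iff sum_subtractf left_diff_distrib)
lemma mmul_diff_right: "mmul V P (M - N) = mmul V P M - mmul V P N"
  by (auto simp: mmul_def fun_eq_iff sum_subtractf right_diff_distrib)
lemma mmul_msc_left: "mmul V (msc c M) P = msc c (mmul V M P)"
  by (auto simp: mmul_def fun_eq_iff sum_distrib_left mult.assoc)
lemma mmul_msc_right: "mmul V P (msc c M) = msc c (mmul V P M)"
  by (auto simp: mmul_def fun_eq_iff sum_distrib_left mult.left_commute)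
lemma mmul_zero_left[simp]: "mmul V 0 P = 0" by (auto simp: mmul_def fun_eq_iff)
lemma mmul_zero_right[simp]: "mmul V P 0 = 0" by (auto simp: mmul_def fun_eq_iff)
lemma mmul_sum_right: "finite I \<Longrightarrow> mmul V P (\<Sum>i\<in>I. f i) = (\<Sum>i\<in>I. mmul V P (f i))"
  by (auto simp: fun_eq_iff mmul_def sum_apply2 sum_distrib_left intro!: sum.swap)
lemma mmul_sum_left: "finite I \<Longrightarrow> mmul V (\<Sum>i\<in>I. f i) P = (\<Sum>i\<in>I. mmul V (f i) P)"
  by (auto simp: fun_eq_iff mmul_def sum_apply2 sum_distrib_right intro!: sum.swap)

lemma mmul_mid_left: assumes "finite V" "supp V M" shows "mmul V (mid V) M = M"
proof (intro ext)
  fix u v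
  show "mmul V (mid V) M u v = M u v"
  proof (cases "u \<in> V \<and> v \<in> V")
    case True
    then have "mmul V (mid V) M u v = (\<Sum>w\<in>V. if w = u then M w v else 0)"
      by (auto simp: mmul_def mid_def intro!: sum.cong)
    also have "\<dots> = M u v" using True assms(1) by (simp add: sum.delta')
    finally show ?thesis .
  qed (use assms in \<open>auto simp: mmul_def supp_def\<close>)
qed

lemma mmul_mid_right: assumes "finite V" "supp V M" shows "mmul V M (mid V) = M"
proof (intro ext)
  fix u v
  show "mmul V M (mid V) u v = M u v"
  proof (cases "u \<in> V \<and> v \<in> V")
    case True
    then have "mmul V M (mid V) u v = (\<Sum>w\<in>V. if w = v then M u w else 0)"
      by (auto simp: mmul_def mid_def intro!: sum.cong)
    also have "\<dots> = M u v" using True assms(1) by (simp add: sum.delta')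
    finally show ?thesis .
  qed (use assms in \<open>auto simp: mmul_def supp_def\<close>)
qed

lemma msc_zero[simp]: "msc 0 M = 0" by (auto simp: msc_def fun_eq_iff)

lemma peval_upto:
  assumes "degree p < n"
  shows "peval V A p = (\<Sum>i<n. msc (coeff p i) (mpow V A i))"
proof -
  have "(\<Sum>i<n. msc (coeff p i) (mpow V A i)) = (\<Sum>i\<le>degree p. msc (coeff p i) (mpow V A i))"
    using assms by (intro sum.mono_neutral_right) (auto simp: coeff_eq_0)
  then show ?thesis unfolding peval_def by simp
qed

lemma peval_add: "peval V A (p + q) = peval V A p + peval V A q"
proof -
  define n where "n = Suc (max (degree p) (degree q))"
  have d: "degree (p+q) < n" "degree p < n" "degree q < n"
    using degree_add_le_max[of p q] by (auto simp: n_def)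
  show ?thesis unfolding peval_upto[OF d(1)] peval_upto[OF d(2)] peval_upto[OF d(3)]
    by (simp add: sum.distrib[symmetric] msc_def fun_eq_iff sum_apply2 distrib_right)
qed

lemma peval_smult: "peval V A (smult c p) = msc c (peval V A p)"
proof -
  have d: "degree (smult c p) < Suc (degree p)" "degree p < Suc (degree p)"
    using degree_smult_le[of c p] by auto
  show ?thesis unfolding peval_upto[OF d(1)] peval_upto[OF d(2)]
    by (simp add: msc_def fun_eq_iff sum_apply2 sum_distrib_left mult.assoc del: sum.lessThan_Suc)
qed

lemma peval_const: "peval V A [:c:] = msc c (mid V)"
  unfolding peval_def by simp

lemma peval_zero[simp]: "peval V A 0 = 0"
  unfolding peval_def by simp

lemma peval_pCons0: "peval V A (pCons 0 p) = mmul V A (peval V A p)"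
proof -
  have d1: "degree (pCons 0 p) < Suc (Suc (degree p))" by (simp add: degree_pCons_le le_imp_less_Suc)
  have d2: "degree p < Suc (degree p)" by simp
  have "peval V A (pCons 0 p) = (\<Sum>i<Suc (Suc (degree p)). msc (coeff (pCons 0 p) i) (mpow V A i))"
    by (rule peval_upto[OF d1])
  also have "\<dots> = (\<Sum>i<Suc (degree p). msc (coeff (pCons 0 p) (Suc i)) (mpow V A (Suc i)))"
    by (subst sum.lessThan_Suc_shift) simp
  also have "\<dots> = (\<Sum>i<Suc (degree p). mmul V A (msc (coeff p i) (mpow V A i)))"
    by (simp add: mmul_msc_right)
  also have "\<dots> = mmul V A (peval V A p)"
    by (simp add: mmul_sum_right peval_upto[OF d2] del: sum.lessThan_Suc)
  finally show ?thesis .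
qed

lemma peval_pCons: "peval V A (pCons c p) = msc c (mid V) + mmul V A (peval V A p)"
proof -
  have "pCons c p = [:c:] + pCons 0 p" by simp
  then show ?thesis by (metis peval_add peval_const peval_pCons0)
qed

lemma peval_mult:
  assumes "finite V"
  shows "peval V A (p * q) = mmul V (peval V A p) (peval V A q)"
proof (induction p rule: pCons_induct)
  case 0
  then show ?case by (simp add: fun_eq_iff mmul_def)
next
  case (pCons c p)
  have "pCons c p * q = smult c q + pCons 0 (p * q)" by simp
  then have "peval V A (pCons c p * q) = msc c (peval V A q) + mmul V A (peval V A (p*q))"
    by (simp add: peval_add peval_smult peval_pCons0)
  also have "\<dots> = msc c (peval V A q) + mmul V A (mmul V (peval V A p) (peval V A q))"
    using pCons by simp
  also have "\<dots> = mmul V (peval V A (pCons c p)) (peval V A q)"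
    by (simp add: peval_pCons mmul_add_left mmul_msc_left mmul_mid_left[OF assms supp_peval]
        mmul_assoc[OF assms])
  finally show ?case .
qed

lemma peval_X: "finite V \<Longrightarrow> supp V A \<Longrightarrow> peval V A [:0,1:] = A"
  by (simp add: peval_pCons0 peval_const mmul_msc_right mmul_mid_right msc_def)

lemma peval_comm:
  assumes "finite V"
  shows "mmul V (peval V A p) (peval V A q) = mmul V (peval V A q) (peval V A p)"
  by (metis assms peval_mult mult.commute)

lemma peval_mpow: "finite V \<Longrightarrow> supp V A \<Longrightarrow> peval V A (monom 1 k) = mpow V A k"
proof (induction k)
  case 0
  then show ?case by (simp add: peval_def msc_def)
next
  case (Suc k)
  have "monom (1::real) (Suc k) = pCons 0 (monom 1 k)" by (simp add: monom_Suc)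
  then show ?case using Suc by (simp add: peval_pCons0)
qed

definition msym :: "'a rmat \<Rightarrow> bool" where "msym M \<longleftrightarrow> (\<forall>u v. M u v = M v u)"

lemma msym_mmul_comm:
  assumes "msym M" "msym N" "mmul V M N = mmul V N M"
  shows "msym (mmul V M N)"
proof -
  have "mmul V M N u v = mmul V M N v u" for u v
  proof -
    have "mmul V M N u v = mmul V N M u v" using assms(3) by simp
    also have "\<dots> = mmul V M N v u" using assms(1,2) unfolding mmul_def msym_def
      by (auto simp: mult.commute)
    finally show ?thesis .
  qed
  then show ?thesis unfolding msym_def by blast
qed

lemma msym_mpow:
  assumes "finite V" "supp V A" "msym A"
  shows "msym (mpow V A k)"
proof (induction k)
  case 0
  then show ?case by (auto simp: msym_def mid_def)
next
  case (Suc k)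
  have "mmul V A (mpow V A k) = mmul V (mpow V A k) A"
    using peval_comm[OF assms(1), of A "[:0,1:]" "monom 1 k"]
    by (simp add: peval_X[OF assms(1,2)] peval_mpow[OF assms(1,2)])
  then show ?case using Suc assms(3) by (simp add: msym_mmul_comm)
qed

lemma msym_peval:
  assumes "finite V" "supp V A" "msym A"
  shows "msym (peval V A p)"
  using msym_mpow[OF assms] unfolding peval_def msym_def by (auto simp: sum_apply2)

definition adj :: "('a \<Rightarrow> 'a \<Rightarrow> bool) \<Rightarrow> 'a rmat" where
  "adj E = (\<lambda>u v. if E u v then 1 else 0)"

lemma sg_finite: "simple_graph V E \<Longrightarrow> finite V" by (simp add: simple_graph_def)
lemma sg_in: "simple_graph V E \<Longrightarrow> E u v \<Longrightarrow> u \<in> V \<and> v \<in> V" by (simp add: simple_graph_def)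
lemma sg_sym: "simple_graph V E \<Longrightarrow> E u v \<Longrightarrow> E v u" by (simp add: simple_graph_def)
lemma sg_irr: "simple_graph V E \<Longrightarrow> \<not> E u u" by (simp add: simple_graph_def)

lemma supp_adj: "simple_graph V E \<Longrightarrow> supp V (adj E)"
  unfolding supp_def adj_def simple_graph_def by auto

lemma msym_adj: "simple_graph V E \<Longrightarrow> msym (adj E)"
  unfolding msym_def adj_def simple_graph_def by auto

lemma walks_mpow:
  assumes "simple_graph V E" "v \<in> V"
  shows "u \<in> V \<Longrightarrow> mpow V (adj E) k u v = real (walks V E k u v)"
proof (induction k arbitrary: u)
  case 0
  then show ?case using assms by (simp add: mid_def)
next
  case (Suc k)
  have "mpow V (adj E) (Suc k) u v = (\<Sum>w\<in>V. adj E u w * mpow V (adj E) k w v)"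
    using Suc.prems assms by (simp add: mmul_def)
  also have "\<dots> = (\<Sum>w\<in>V. if E u w then real (walks V E k w v) else 0)"
    using Suc.IH by (intro sum.cong) (auto simp: adj_def)
  also have "\<dots> = (\<Sum>w\<in>{w\<in>V. E u w}. real (walks V E k w v))"
    using sg_finite[OF assms(1)] by (simp add: sum.inter_filter)
  also have "\<dots> = real (walks V E (Suc k) u v)" by simp
  finally show ?case .
qed

lemma peval_entry:
  assumes "simple_graph V E" "u \<in> V" "v \<in> V"
  shows "peval V (adj E) p u v = (\<Sum>i\<le>degree p. coeff p i * real (walks V E i u v))"
  unfolding peval_def using walks_mpow[OF assms(1,3,2)] by (simp add: sum_apply2)

lemma oh_diag:
  assumes "one_homogeneous V E" "u \<in> V" "u' \<in> V"
  shows "walks V E k u u = walks V E k u' u'"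
proof -
  have "\<forall>k. \<forall>u\<in>V. \<forall>u'\<in>V. walks V E k u u = walks V E k u' u'"
    using assms(1) unfolding one_homogeneous_def by (rule conjunct1)
  then show ?thesis using assms(2,3) by blast
qed

lemma oh_edge:
  assumes "one_homogeneous V E" "E u v" "E u' v'"
  shows "walks V E k u v = walks V E k u' v'"
proof -
  have "\<forall>k u v u' v'. E u v \<longrightarrow> E u' v' \<longrightarrow> walks V E k u v = walks V E k u' v'"
    using assms(1) unfolding one_homogeneous_def by (rule conjunct2)
  then show ?thesis using assms(2,3) by blast
qed

lemma peval_diag_const:
  assumes "simple_graph V E" "one_homogeneous V E" "u \<in> V" "u' \<in> V"
  shows "peval V (adj E) p u u = peval V (adj E) p u' u'"
  unfolding peval_entry[OF assms(1,3,3)] peval_entry[OF assms(1,4,4)]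
  by (simp only: oh_diag[OF assms(2,3,4)])

lemma peval_edge_const:
  assumes "simple_graph V E" "one_homogeneous V E" "E u v" "E u' v'"
  shows "peval V (adj E) p u v = peval V (adj E) p u' v'"
proof -
  have "u \<in> V" "v \<in> V" "u' \<in> V" "v' \<in> V"
    using sg_in[OF assms(1) assms(3)] sg_in[OF assms(1) assms(4)] by auto
  then show ?thesis unfolding peval_entry[OF assms(1) \<open>u\<in>V\<close> \<open>v\<in>V\<close>]
     peval_entry[OF assms(1) \<open>u'\<in>V\<close> \<open>v'\<in>V\<close>]
    by (simp only: oh_edge[OF assms(2,3,4)])
qed

definition rsum :: "'a set \<Rightarrow> 'a rmat \<Rightarrow> 'a \<Rightarrow> real" where
  "rsum V M u = (\<Sum>w\<in>V. M u w)"

lemma regular: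
  assumes "simple_graph V E" "one_homogeneous V E" "u \<in> V" "u' \<in> V"
  shows "rsum V (adj E) u = rsum V (adj E) u'"
proof -
  have "rsum V (adj E) x = real (walks V E 2 x x)" if "x \<in> V" for x
  proof -
    have "real (walks V E 2 x x) = mpow V (adj E) 2 x x"
      using walks_mpow[OF assms(1) that that] by (simp only:)
    also have "\<dots> = mmul V (adj E) (adj E) x x"
      using mmul_mid_right[OF sg_finite[OF assms(1)] supp_adj[OF assms(1)]]
      by (simp add: numeral_2_eq_2)
    also have "\<dots> = (\<Sum>w\<in>V. adj E x w * adj E w x)"
      using that by (simp add: mmul_def)
    also have "\<dots> = (\<Sum>w\<in>V. adj E x w)"
    proof (rule sum.cong[OF refl])
      fix w show "adj E x w * adj E w x = adj E x w"
        using sg_sym[OF assms(1), of x w] sg_sym[OF assms(1), of w x] by (auto simp: adj_def)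
    qed
    finally show ?thesis by (simp add: rsum_def)
  qed
  moreover have "walks V E 2 u u = walks V E 2 u' u'"
    by (rule oh_diag[OF assms(2,3,4)])
  ultimately show ?thesis using assms(3,4) by (simp only:)
qed

lemma rsum_ge1:
  assumes "simple_graph V E" "E u v"
  shows "rsum V (adj E) u \<ge> 1"
proof -
  have "v \<in> V" using sg_in[OF assms(1,2)] by auto
  have "rsum V (adj E) u \<ge> adj E u v"
    unfolding rsum_def using sg_finite[OF assms(1)] \<open>v\<in>V\<close>
    by (intro member_le_sum) (auto simp: adj_def)
  then show ?thesis using assms by (simp add: adj_def)
qed

definition qf :: "'a set \<Rightarrow> 'a rmat \<Rightarrow> ('a \<Rightarrow> real) \<Rightarrow> real" where
  "qf S M x = (\<Sum>u\<in>S. \<Sum>v\<in>S. M u v * x u * x v)"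

definition nsq :: "'a set \<Rightarrow> ('a \<Rightarrow> real) \<Rightarrow> real" where
  "nsq S x = (\<Sum>u\<in>S. (x u)\<^sup>2)"

lemma qf_insert:
  assumes "finite S" "u \<notin> S"
  shows "qf (insert u S) M x = M u u * (x u)\<^sup>2 + x u * (\<Sum>v\<in>S. M u v * x v)
           + x u * (\<Sum>v\<in>S. M v u * x v) + qf S M x"
proof -
  have "qf (insert u S) M x = (\<Sum>v\<in>insert u S. M u v * x u * x v)
         + (\<Sum>w\<in>S. \<Sum>v\<in>insert u S. M w v * x w * x v)"
    unfolding qf_def using assms by (simp add: sum.insert)
  also have "\<dots> = (M u u * x u * x u + (\<Sum>v\<in>S. M u v * x u * x v))
         + (\<Sum>w\<in>S. M w u * x w * x u + (\<Sum>v\<in>S. M w v * x w * x v))"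
    using assms by (simp add: sum.insert)
  also have "\<dots> = M u u * (x u)\<^sup>2 + x u * (\<Sum>v\<in>S. M u v * x v)
           + x u * (\<Sum>v\<in>S. M v u * x v) + qf S M x"
    unfolding qf_def by (simp add: sum.distrib sum_distrib_left power2_eq_square algebra_simps)
  finally show ?thesis .
qed

lemma qf_cong: "(\<And>w. w \<in> S \<Longrightarrow> x w = y w) \<Longrightarrow> qf S M x = qf S M y"
  unfolding qf_def by (auto intro!: sum.cong)

lemma sum_delta_mult: "finite S \<Longrightarrow> v \<in> S \<Longrightarrow> (\<Sum>w\<in>S. f w * (if w = v then 1 else 0)) = (f v :: real)"
  by (simp add: if_distrib cong: if_cong)

lemma qf_delta:
  assumes "finite S" "v \<in> S"
  shows "qf S M (\<lambda>w. if w = v then 1 else 0) = M v v"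
proof -
  let ?d = "\<lambda>w. if w = v then 1 else (0::real)"
  have "(\<Sum>b\<in>S. M a b * ?d a * ?d b) = M a v * ?d a" for a
    using sum_delta_mult[OF assms, of "\<lambda>b. M a b * ?d a"] by simp
  then have "qf S M ?d = (\<Sum>a\<in>S. M a v * ?d a)" unfolding qf_def by simp
  also have "\<dots> = M v v" using sum_delta_mult[OF assms, of "\<lambda>a. M a v"] by simp
  finally show ?thesis .
qed

lemma sos_decomp:
  assumes "finite S" "\<forall>u\<in>S. \<forall>v\<in>S. M u v = M v u" "\<forall>x. qf S M x \<ge> 0"
  shows "\<exists>(L::nat \<Rightarrow> 'a \<Rightarrow> real) m. \<forall>u\<in>S. \<forall>v\<in>S. M u v = (\<Sum>j<m. L j u * L j v)"
  using assms
proof (induction S arbitrary: M rule: finite_induct)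
  case empty
  then show ?case by auto
next
  case (insert u S M)
  note fin = insert.hyps(1) and uS = insert.hyps(2)
  have sym: "M a b = M b a" if "a \<in> insert u S" "b \<in> insert u S" for a b
    using insert.prems(1) that by blast
  have qfi: "qf (insert u S) M x = M u u * (x u)\<^sup>2 + 2 * x u * (\<Sum>v\<in>S. M u v * x v) + qf S M x" for x
  proof -
    have "(\<Sum>v\<in>S. M v u * x v) = (\<Sum>v\<in>S. M u v * x v)"
      using sym by (intro sum.cong) auto
    then show ?thesis using qf_insert[OF fin uS, of M x] by simp
  qed
  have psd: "qf (insert u S) M x \<ge> 0" for x using insert.prems(2) by blast
  show ?case
  proof (cases "M u u = 0")
    case True
    have zero: "M u v = 0" if "v \<in> S" for v
    proof (rule ccontr)
      assume ne: "M u v \<noteq> 0"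
      define t where "t = - (M v v + 1) / (2 * M u v)"
      define x where "x = (\<lambda>w. if w = u then t else if w = v then 1 else (0::real))"
      have xS: "x w = (if w = v then 1 else 0)" if "w \<in> S" for w
        using that uS by (auto simp: x_def)
      have "qf (insert u S) M x = 2 * t * M u v + M v v"
      proof -
        have "(\<Sum>w\<in>S. M u w * x w) = M u v"
          using sum_delta_mult[OF fin \<open>v\<in>S\<close>, of "M u"] xS by (simp cong: sum.cong)
        moreover have "qf S M x = M v v"
          using qf_cong[of S x "\<lambda>w. if w = v then 1 else 0" M, OF xS] qf_delta[OF fin \<open>v\<in>S\<close>]
          by simp
        ultimately show ?thesis using qfi[of x] True by (simp add: x_def)
      qed
      also have "\<dots> = -1" using ne by (simp add: t_def field_simps)
      finally show False using psd[of x] by simp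
    qed
    have psdS: "qf S M x \<ge> 0" for x
    proof -
      have "qf (insert u S) M (x(u := 0)) = qf S M (x(u:=0))" using qfi[of "x(u:=0)"] by simp
      also have "\<dots> = qf S M x" using uS by (intro qf_cong) auto
      finally show ?thesis using psd[of "x(u:=0)"] by simp
    qed
    have symS0: "\<forall>a\<in>S. \<forall>b\<in>S. M a b = M b a" using sym by auto
    have psdS': "\<forall>x. qf S M x \<ge> 0" using psdS by blast
    from insert.IH[of M, OF symS0 psdS'] obtain L and m :: nat
      where L: "\<forall>a\<in>S. \<forall>b\<in>S. M a b = (\<Sum>j<m. L j a * L j b)" by blast
    define L' where "L' = (\<lambda>j w. if w = u then 0 else L j w)"
    have "\<forall>a\<in>insert u S. \<forall>b\<in>insert u S. M a b = (\<Sum>j<m. L' j a * L' j b)"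
    proof (intro ballI)
      fix a b assume a: "a \<in> insert u S" and b: "b \<in> insert u S"
      show "M a b = (\<Sum>j<m. L' j a * L' j b)"
      proof (cases "a = u \<or> b = u")
        case True
        then have "M a b = 0" using zero sym[OF a b] a b True \<open>M u u = 0\<close> by auto
        then show ?thesis using True by (auto simp: L'_def)
      next
        case False
        then show ?thesis using a b L by (auto simp: L'_def)
      qed
    qed
    then show ?thesis by blast
  next
    case False
    define c where "c = M u u"
    have c0: "c \<ge> 0"
    proof -
      have "qf (insert u S) M (\<lambda>w. if w = u then 1 else 0) = c"
        using qf_delta[of "insert u S" u M] fin by (simp add: c_def)
      then show ?thesis using psd by metis
    qed
    with False have cpos: "c > 0" by (simp add: c_def)
    define M' where "M' = (\<lambda>a b. M a b - M a u * M u b / c)"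
    have symS: "\<forall>a\<in>S. \<forall>b\<in>S. M' a b = M' b a"
      using sym by (auto simp: M'_def)
    have psdS: "qf S M' x \<ge> 0" for x
    proof -
      define l where "l = (\<Sum>v\<in>S. M u v * x v)"
      define x' where "x' = x(u := - l / c)"
      have l': "(\<Sum>v\<in>S. M u v * x' v) = l"
        unfolding l_def x'_def using uS by (intro sum.cong) auto
      have q1: "qf S M x' = qf S M x" unfolding x'_def using uS by (intro qf_cong) auto
      have "qf (insert u S) M x' = c * (l/c)\<^sup>2 - 2 * (l / c) * l + qf S M x"
        using qfi[of x'] l' q1 by (simp add: x'_def c_def)
      also have "\<dots> = qf S M x - l\<^sup>2 / c" using cpos by (simp add: power2_eq_square field_simps)
      finally have A: "qf (insert u S) M x' = qf S M x - l\<^sup>2 / c" .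
      have "qf S M' x = qf S M x - (\<Sum>a\<in>S. \<Sum>b\<in>S. M a u * M u b / c * x a * x b)"
        unfolding qf_def M'_def by (simp add: sum_subtractf left_diff_distrib)
      also have "(\<Sum>a\<in>S. \<Sum>b\<in>S. M a u * M u b / c * x a * x b)
                 = (\<Sum>a\<in>S. M u a * x a) * (\<Sum>b\<in>S. M u b * x b) / c"
        using sym by (simp add: sum_product sum_divide_distrib algebra_simps cong: sum.cong)
      also have "\<dots> = l\<^sup>2 / c" by (simp add: l_def power2_eq_square)
      finally have B: "qf S M' x = qf S M x - l\<^sup>2 / c" .
      show ?thesis using A B psd[of x'] by simp
    qed
    obtain L and m :: nat where L: "\<forall>a\<in>S. \<forall>b\<in>S. M' a b = (\<Sum>j<m. L j a * L j b)"
      using insert.IH[of M', OF symS] psdS by blast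
    define L' where "L' = (\<lambda>j w. if j < m then (if w = u then 0 else L j w) else M u w / sqrt c)"
    have "\<forall>a\<in>insert u S. \<forall>b\<in>insert u S. M a b = (\<Sum>j<Suc m. L' j a * L' j b)"
    proof (intro ballI)
      fix a b assume a: "a \<in> insert u S" and b: "b \<in> insert u S"
      have split: "(\<Sum>j<Suc m. L' j a * L' j b) =
          (\<Sum>j<m. (if a = u then 0 else L j a) * (if b = u then 0 else L j b)) + M u a * M u b / c"
        using cpos by (simp add: L'_def real_sqrt_mult[symmetric] power2_eq_square[symmetric]
              del: real_sqrt_mult)
      show "M a b = (\<Sum>j<Suc m. L' j a * L' j b)"
      proof (cases "a = u")
        case True
        then show ?thesis unfolding split using cpos by (simp add: c_def)
      next
        case au: False
        show ?thesis
        proof (cases "b = u")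
          case True
          then show ?thesis unfolding split using cpos au sym[OF a b] by (simp add: c_def)
        next
          case False
          then have "a \<in> S" "b \<in> S" using a b au by auto
          then have "M a b - M a u * M u b / c = (\<Sum>j<m. L j a * L j b)"
            using L by (simp add: M'_def)
          then show ?thesis unfolding split using au False sym[OF a, of u]
            by simp
        qed
      qed
    qed
    then show ?thesis by blast
  qed
qed

interpretation mvs: vector_space "msc :: real \<Rightarrow> 'a rmat \<Rightarrow> 'a rmat"
  by unfold_locales (auto simp: msc_def fun_eq_iff algebra_simps)

definition delta2 :: "'a \<times> 'a \<Rightarrow> 'a rmat" where
  "delta2 = (\<lambda>(a,b). (\<lambda>u v. if u = a \<and> v = b then 1 else 0))"

lemma supp_in_span:
  assumes "finite V" "supp V M"
  shows "M \<in> mvs.span (delta2 ` (V \<times> V))"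
proof -
  have eq: "M = (\<Sum>p\<in>V\<times>V. msc (M (fst p) (snd p)) (delta2 p))"
  proof (intro ext)
    fix u v
    have "(\<Sum>p\<in>V\<times>V. msc (M (fst p) (snd p)) (delta2 p)) u v
        = (\<Sum>p\<in>V\<times>V. M (fst p) (snd p) * (if p = (u,v) then 1 else 0))"
      by (auto simp: sum_apply2 delta2_def case_prod_beta prod_eq_iff intro!: sum.cong)
    also have "\<dots> = (if (u,v) \<in> V \<times> V then M u v else 0)"
      using assms(1) by (simp add: if_distrib cong: if_cong)
    also have "\<dots> = M u v" using assms(2) unfolding supp_def by auto
    finally show "M u v = (\<Sum>p\<in>V\<times>V. msc (M (fst p) (snd p)) (delta2 p)) u v" by simp
  qed
  show ?thesis
    by (subst eq, intro mvs.span_sum mvs.span_scale mvs.span_base) auto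
qed

lemma peval_diff: "peval V A (p - q) = peval V A p - peval V A q"
proof -
  have "p - q = p + smult (-1) q" by simp
  then have "peval V A (p - q) = peval V A p + msc (-1) (peval V A q)"
    by (simp only: peval_add peval_smult)
  then show ?thesis by (simp add: msc_def fun_eq_iff)
qed

lemma annihilating_poly:
  assumes "finite V" "supp V A"
  shows "\<exists>q::real poly. q \<noteq> 0 \<and> peval V A q = 0"
proof (cases "inj_on (mpow V A) {..card (V \<times> V)}")
  case False
  then obtain i j where ij: "i \<noteq> j" "mpow V A i = mpow V A j"
    unfolding inj_on_def by blast
  define q :: "real poly" where "q = monom 1 j - monom 1 i"
  have "q \<noteq> 0" using ij(1) unfolding q_def
    by (metis coeff_monom diff_eq_eq add_0 coeff_add zero_neq_one)
  moreover have "peval V A q = 0"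
    unfolding q_def peval_diff peval_mpow[OF assms] using ij by simp
  ultimately show ?thesis by blast
next
  case True
  define N where "N = card (V \<times> V)"
  define P where "P = mpow V A ` {..N}"
  have finP: "finite P" by (simp add: P_def)
  have cardP: "card P = Suc N" using True unfolding P_def N_def by (simp add: card_image)
  have "P \<subseteq> mvs.span (delta2 ` (V \<times> V))"
    unfolding P_def using supp_in_span[OF assms(1)] by auto
  moreover have "card (delta2 ` (V \<times> V)) \<le> N"
    unfolding N_def by (rule card_image_le) (simp add: assms(1))
  ultimately have "mvs.dependent P"
    using mvs.independent_span_bound[of "delta2 ` (V \<times> V)" P] assms(1) cardP by auto
  then obtain c where c: "\<exists>v\<in>P. c v \<noteq> 0" "(\<Sum>v\<in>P. msc (c v) v) = 0"
    using mvs.dependent_finite[OF finP] by blast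
  define q :: "real poly" where "q = (\<Sum>k\<le>N. monom (c (mpow V A k)) k)"
  have coeffq: "coeff q k = (if k \<le> N then c (mpow V A k) else 0)" for k
    unfolding q_def by (simp add: coeff_sum coeff_monom)
  have "q \<noteq> 0"
  proof -
    obtain k where "k \<le> N" "c (mpow V A k) \<noteq> 0" using c(1) unfolding P_def by auto
    then have "coeff q k \<noteq> 0" by (simp add: coeffq)
    then show ?thesis by auto
  qed
  moreover have "peval V A q = 0"
  proof -
    have "degree q \<le> N" by (rule degree_le) (auto simp: coeffq)
    then have dq: "degree q < Suc N" by simp
    have "peval V A q = (\<Sum>k<Suc N. msc (coeff q k) (mpow V A k))" by (rule peval_upto[OF dq])
    also have "\<dots> = (\<Sum>k\<in>{..N}. msc (c (mpow V A k)) (mpow V A k))"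
      by (intro sum.cong) (auto simp: coeffq)
    also have "\<dots> = (\<Sum>v\<in>P. msc (c v) v)"
      unfolding P_def using True N_def by (simp add: sum.reindex)
    finally show ?thesis using c(2) by simp
  qed
  ultimately show ?thesis by blast
qed

definition bf :: "'a set \<Rightarrow> 'a rmat \<Rightarrow> ('a \<Rightarrow> real) \<Rightarrow> ('a \<Rightarrow> real) \<Rightarrow> real" where
  "bf S M x y = (\<Sum>u\<in>S. \<Sum>v\<in>S. M u v * x u * y v)"

definition mv :: "'a set \<Rightarrow> 'a rmat \<Rightarrow> ('a \<Rightarrow> real) \<Rightarrow> ('a \<Rightarrow> real)" where
  "mv S M x = (\<lambda>u. \<Sum>v\<in>S. M u v * x v)"

lemma qf_bf: "qf S M x = bf S M x x" by (simp add: qf_def bf_def)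

lemma bf_mv:
  assumes "finite V"
  shows "bf V M x (mv V N y) = bf V (mmul V M N) x y"
proof -
  have "bf V M x (mv V N y) = (\<Sum>u\<in>V. \<Sum>v\<in>V. \<Sum>w\<in>V. M u v * x u * (N v w * y w))"
    by (simp add: bf_def mv_def sum_distrib_left)
  also have "\<dots> = (\<Sum>u\<in>V. \<Sum>w\<in>V. \<Sum>v\<in>V. M u v * x u * (N v w * y w))"
    by (rule sum.cong[OF refl], rule sum.swap)
  also have "\<dots> = (\<Sum>u\<in>V. \<Sum>w\<in>V. (\<Sum>v\<in>V. M u v * N v w) * x u * y w)"
    by (simp add: sum_distrib_left sum_distrib_right mult_ac)
  also have "\<dots> = bf V (mmul V M N) x y"
    unfolding bf_def
    by (rule sum.cong[OF refl], rule sum.cong[OF refl]) (simp add: mmul_def)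
  finally show ?thesis .
qed

lemma bf_mid: assumes "finite V" shows "bf V (mid V) x y = (\<Sum>u\<in>V. x u * y u)"
proof -
  have "bf V (mid V) x y = (\<Sum>u\<in>V. \<Sum>v\<in>V. (x u * y v) * (if v = u then 1 else 0))"
    unfolding bf_def by (intro sum.cong refl) (auto simp: mid_def)
  also have "\<dots> = (\<Sum>u\<in>V. x u * y u)"
    using assms by (intro sum.cong refl) (simp add: sum_delta_mult)
  finally show ?thesis .
qed

lemma bf_sym: "msym M \<Longrightarrow> bf V M x y = bf V M y x"
  unfolding bf_def msym_def by (subst sum.swap) (simp add: mult_ac)

lemma qf_abs_le:
  assumes "finite V"
  shows "\<bar>qf V M x\<bar> \<le> (\<Sum>u\<in>V. \<Sum>v\<in>V. \<bar>M u v\<bar>) * nsq V x"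
proof -
  have xx: "\<bar>x u * x v\<bar> \<le> nsq V x" if "u \<in> V" "v \<in> V" for u v
  proof -
    have "\<bar>x u * x v\<bar> \<le> ((x u)\<^sup>2 + (x v)\<^sup>2) / 2"
    proof -
      have "0 \<le> (\<bar>x u\<bar> - \<bar>x v\<bar>)\<^sup>2" by simp
      then show ?thesis by (simp add: power2_eq_square abs_mult algebra_simps)
    qed
    also have "\<dots> \<le> nsq V x"
    proof -
      have "(x u)\<^sup>2 \<le> nsq V x" "(x v)\<^sup>2 \<le> nsq V x"
        unfolding nsq_def using assms that by (auto intro!: member_le_sum)
      then show ?thesis by simp
    qed
    finally show ?thesis .
  qed
  have "\<bar>qf V M x\<bar> \<le> (\<Sum>u\<in>V. \<Sum>v\<in>V. \<bar>M u v * x u * x v\<bar>)"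
    unfolding qf_def by (rule order_trans[OF sum_abs]) (intro sum_mono sum_abs)
  also have "\<dots> \<le> (\<Sum>u\<in>V. \<Sum>v\<in>V. \<bar>M u v\<bar> * nsq V x)"
    using xx by (intro sum_mono) (auto simp: abs_mult mult.assoc intro!: mult_left_mono)
  also have "\<dots> = (\<Sum>u\<in>V. \<Sum>v\<in>V. \<bar>M u v\<bar>) * nsq V x"
    by (simp add: sum_distrib_right)
  finally show ?thesis .
qed

lemma nsq_nonneg: "nsq V x \<ge> 0" unfolding nsq_def by (auto intro: sum_nonneg)

lemma nsq_zero_qf:
  assumes "finite V" "nsq V x = 0" shows "qf V M x = 0"
proof -
  have "\<forall>u\<in>V. (x u)\<^sup>2 = 0" using assms unfolding nsq_def
    by (subst sum_nonneg_eq_0_iff[symmetric]) auto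
  then show ?thesis unfolding qf_def by simp
qed

lemma cauchy_schwarz_sum:
  fixes a b :: "nat \<Rightarrow> real"
  shows "(\<Sum>j<m. a j * b j)\<^sup>2 \<le> (\<Sum>j<m. (a j)\<^sup>2) * (\<Sum>j<m. (b j)\<^sup>2)"
proof -
  have sw: "(\<Sum>i<m. \<Sum>j<m. (a j)\<^sup>2 * (b i)\<^sup>2) = (\<Sum>i<m. \<Sum>j<m. (a i)\<^sup>2 * (b j)\<^sup>2)"
    by (rule sum.swap)
  have "0 \<le> (\<Sum>i<m. \<Sum>j<m. (a i * b j - a j * b i)\<^sup>2)" by (intro sum_nonneg) auto
  also have "\<dots> = (\<Sum>i<m. \<Sum>j<m. (a i)\<^sup>2 * (b j)\<^sup>2) + (\<Sum>i<m. \<Sum>j<m. (a j)\<^sup>2 * (b i)\<^sup>2)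
        - 2 * (\<Sum>i<m. \<Sum>j<m. (a i * b i) * (a j * b j))"
    by (simp add: power2_eq_square algebra_simps sum.distrib sum_subtractf sum_distrib_left)
  also have "\<dots> = 2 * (\<Sum>i<m. \<Sum>j<m. (a i)\<^sup>2 * (b j)\<^sup>2) - 2 * (\<Sum>i<m. \<Sum>j<m. (a i * b i) * (a j * b j))"
    unfolding sw by simp
  also have "\<dots> = 2 * ((\<Sum>j<m. (a j)\<^sup>2) * (\<Sum>j<m. (b j)\<^sup>2) - (\<Sum>j<m. a j * b j)\<^sup>2)"
    by (simp add: sum_product power2_eq_square algebra_simps)
  finally show ?thesis by simp
qed

lemma bf_sos:
  assumes "\<forall>u\<in>V. \<forall>v\<in>V. M u v = (\<Sum>j<m. L j u * L j v)"
  shows "bf V M x y = (\<Sum>j<m. (\<Sum>u\<in>V. L j u * x u) * (\<Sum>v\<in>V. L j v * y v))"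
proof -
  have "bf V M x y = (\<Sum>u\<in>V. \<Sum>v\<in>V. \<Sum>j<m. L j u * L j v * x u * y v)"
    unfolding bf_def using assms by (auto simp: sum_distrib_right intro!: sum.cong)
  also have "\<dots> = (\<Sum>u\<in>V. \<Sum>j<m. \<Sum>v\<in>V. L j u * L j v * x u * y v)"
    by (rule sum.cong[OF refl], rule sum.swap)
  also have "\<dots> = (\<Sum>j<m. \<Sum>u\<in>V. \<Sum>v\<in>V. L j u * L j v * x u * y v)"
    by (rule sum.swap)
  also have "\<dots> = (\<Sum>j<m. (\<Sum>u\<in>V. L j u * x u) * (\<Sum>v\<in>V. L j v * y v))"
    by (simp add: sum_product mult_ac)
  finally show ?thesis .
qed

lemma qf_diff: "qf S (M - N) x = qf S M x - qf S N x"
  unfolding qf_def by (simp add: sum_subtractf left_diff_distrib)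

lemma qf_msc: "qf S (msc c M) x = c * qf S M x"
  unfolding qf_def by (simp add: sum_distrib_left mult.assoc)

lemma qf_mid: "finite V \<Longrightarrow> qf V (mid V) x = nsq V x"
  unfolding qf_bf by (simp add: bf_mid nsq_def power2_eq_square)

lemma nsq_delta: "finite V \<Longrightarrow> u \<in> V \<Longrightarrow> nsq V (\<lambda>w. if w = u then 1 else 0) = 1"
proof -
  assume "finite V" "u \<in> V"
  have eq: "(\<lambda>w. (if w = u then 1 else 0::real)\<^sup>2) = (\<lambda>w. 1 * (if w = u then 1 else 0))" by auto
  show ?thesis unfolding nsq_def eq using sum_delta_mult[OF \<open>finite V\<close> \<open>u \<in> V\<close>, of "\<lambda>_. 1"]
    by simp
qed

lemma qf_two:
  assumes "finite S" "u \<in> S" "v \<in> S" "u \<noteq> v" "\<And>w. w \<noteq> u \<Longrightarrow> w \<noteq> v \<Longrightarrow> x w = 0"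
  shows "qf S M x = M u u * (x u)\<^sup>2 + (M u v + M v u) * x u * x v + M v v * (x v)\<^sup>2"
proof -
  have inner: "(\<Sum>b\<in>S. M a b * x a * x b) = (\<Sum>b\<in>{u,v}. M a b * x a * x b)" for a
    using assms by (intro sum.mono_neutral_right) auto
  have "qf S M x = (\<Sum>a\<in>S. \<Sum>b\<in>{u,v}. M a b * x a * x b)"
    unfolding qf_def using inner by simp
  also have "\<dots> = (\<Sum>a\<in>{u,v}. \<Sum>b\<in>{u,v}. M a b * x a * x b)"
    using assms by (intro sum.mono_neutral_right) auto
  also have "\<dots> = M u u * (x u)\<^sup>2 + (M u v + M v u) * x u * x v + M v v * (x v)\<^sup>2"
    using assms(4) by (simp add: power2_eq_square algebra_simps)
  finally show ?thesis .
qed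

lemma nsq_two:
  assumes "finite S" "u \<in> S" "v \<in> S" "u \<noteq> v" "\<And>w. w \<noteq> u \<Longrightarrow> w \<noteq> v \<Longrightarrow> x w = 0"
  shows "nsq S x = (x u)\<^sup>2 + (x v)\<^sup>2"
proof -
  have "nsq S x = (\<Sum>a\<in>{u,v}. (x a)\<^sup>2)"
    unfolding nsq_def using assms by (intro sum.mono_neutral_right) auto
  then show ?thesis using assms(4) by simp
qed

locale hgraph =
  fixes V :: "'a set" and E :: "'a \<Rightarrow> 'a \<Rightarrow> bool" and u0 v0 :: 'a
  assumes sg: "simple_graph V E" and oh: "one_homogeneous V E" and e0: "E u0 v0"
begin

abbreviation "A \<equiv> adj E"

lemma fin: "finite V" using sg_finite[OF sg] .
lemma u0V: "u0 \<in> V" and v0V: "v0 \<in> V" using sg_in[OF sg e0] by auto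
lemma u0v0: "u0 \<noteq> v0" using sg_irr[OF sg] e0 by metis
lemma suppA: "supp V A" using supp_adj[OF sg] .
lemma msymA: "msym A" using msym_adj[OF sg] .

definition Cset where "Cset = {c. \<forall>x. c * nsq V x \<le> qf V A x}"
definition amin where "amin = Sup Cset"
definition dg where "dg = rsum V A u0"

lemma Cset_le0: "c \<in> Cset \<Longrightarrow> c \<le> 0"
proof -
  assume "c \<in> Cset"
  then have "c * nsq V (\<lambda>w. if w = u0 then 1 else 0) \<le> qf V A (\<lambda>w. if w = u0 then 1 else 0)"
    unfolding Cset_def by blast
  then show "c \<le> 0" using nsq_delta[OF fin u0V] qf_delta[OF fin u0V, of A] sg_irr[OF sg, of u0]
    by (simp add: adj_def)
qed

lemma Cset_bdd: "bdd_above Cset" unfolding bdd_above_def using Cset_le0 by blast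

lemma Cset_ne: "Cset \<noteq> {}"
proof -
  define K where "K = (\<Sum>u\<in>V. \<Sum>v\<in>V. \<bar>A u v\<bar>)"
  have "- K * nsq V x \<le> qf V A x" for x
    using qf_abs_le[OF fin, of A x] unfolding K_def by (simp add: abs_le_iff)
  then have "- K \<in> Cset" unfolding Cset_def by blast
  then show ?thesis by blast
qed

lemma amin_le: "amin * nsq V x \<le> qf V A x"
proof (cases "nsq V x = 0")
  case True
  then show ?thesis using nsq_zero_qf[OF fin True] by simp
next
  case False
  then have pos: "nsq V x > 0" using nsq_nonneg[of V x] by simp
  have "amin \<le> qf V A x / nsq V x"
    unfolding amin_def
  proof (rule cSup_least[OF Cset_ne])
    fix c assume "c \<in> Cset"
    then have "c * nsq V x \<le> qf V A x" unfolding Cset_def by blast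
    then show "c \<le> qf V A x / nsq V x" using pos by (simp add: field_simps)
  qed
  then show ?thesis using pos by (simp add: field_simps)
qed

lemma amin_in: "amin \<in> Cset" unfolding Cset_def using amin_le by blast

lemma amin_neg: "amin \<le> -1"
proof -
  define x where "x = (\<lambda>w. if w = u0 then 1 else if w = v0 then -1 else (0::real))"
  have x0: "x w = 0" if "w \<noteq> u0" "w \<noteq> v0" for w using that by (simp add: x_def)
  have "qf V A x = -2"
    using qf_two[OF fin u0V v0V u0v0 x0, where M=A] u0v0 sg_irr[OF sg] sg_sym[OF sg e0] e0
    by (simp add: x_def adj_def)
  moreover have "nsq V x = 2"
    using nsq_two[OF fin u0V v0V u0v0 x0] u0v0 by (simp add: x_def)
  ultimately show ?thesis using amin_le[of x] by simp
qed

lemma regularA: "u \<in> V \<Longrightarrow> rsum V A u = dg"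
  unfolding dg_def using regular[OF sg oh _ u0V] by blast

lemma dg_pos: "dg \<ge> 1" unfolding dg_def using rsum_ge1[OF sg e0] .

lemma colsum: "v \<in> V \<Longrightarrow> (\<Sum>u\<in>V. A u v) = dg"
proof -
  assume v: "v \<in> V"
  have "(\<Sum>u\<in>V. A u v) = (\<Sum>u\<in>V. A v u)"
    using msymA unfolding msym_def by simp
  then show ?thesis using regularA[OF v] by (simp add: rsum_def)
qed

lemma qf_upper: "qf V A x \<le> dg * nsq V x"
proof -
  have "0 \<le> (\<Sum>u\<in>V. \<Sum>v\<in>V. A u v * (x u - x v)\<^sup>2)"
    by (intro sum_nonneg mult_nonneg_nonneg) (auto simp: adj_def)
  also have "\<dots> = (\<Sum>u\<in>V. \<Sum>v\<in>V. A u v * (x u)\<^sup>2) + (\<Sum>u\<in>V. \<Sum>v\<in>V. A u v * (x v)\<^sup>2)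
                  - 2 * qf V A x"
    unfolding qf_def
    by (simp add: power2_eq_square algebra_simps sum.distrib sum_subtractf sum_distrib_left)
  also have "(\<Sum>u\<in>V. \<Sum>v\<in>V. A u v * (x u)\<^sup>2) = dg * nsq V x"
  proof -
    have "(\<Sum>u\<in>V. \<Sum>v\<in>V. A u v * (x u)\<^sup>2) = (\<Sum>u\<in>V. rsum V A u * (x u)\<^sup>2)"
      by (simp add: rsum_def sum_distrib_right)
    also have "\<dots> = (\<Sum>u\<in>V. dg * (x u)\<^sup>2)" using regularA by simp
    finally show ?thesis by (simp add: nsq_def sum_distrib_left)
  qed
  also have "(\<Sum>u\<in>V. \<Sum>v\<in>V. A u v * (x v)\<^sup>2) = dg * nsq V x"
  proof -
    have "(\<Sum>u\<in>V. \<Sum>v\<in>V. A u v * (x v)\<^sup>2) = (\<Sum>v\<in>V. \<Sum>u\<in>V. A u v * (x v)\<^sup>2)"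
      by (rule sum.swap)
    also have "\<dots> = (\<Sum>v\<in>V. (\<Sum>u\<in>V. A u v) * (x v)\<^sup>2)"
      by (simp add: sum_distrib_right)
    also have "\<dots> = (\<Sum>v\<in>V. dg * (x v)\<^sup>2)" using colsum by simp
    finally show ?thesis by (simp add: nsq_def sum_distrib_left)
  qed
  finally have "0 \<le> dg * nsq V x + dg * nsq V x - 2 * qf V A x" .
  then show ?thesis by linarith
qed

end

lemma bf_mv_left: "bf V M x y = (\<Sum>u\<in>V. x u * mv V M y u)"
  unfolding bf_def mv_def by (simp add: sum_distrib_left mult_ac)

context hgraph
begin

definition Qm where "Qm = A - msc amin (mid V)"

lemma qf_Qm: "qf V Qm x = qf V A x - amin * nsq V x"
  unfolding Qm_def by (simp add: qf_diff qf_msc qf_mid[OF fin])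

lemma Qm_psd: "qf V Qm x \<ge> 0" using qf_Qm amin_le[of x] by simp

lemma msym_Qm: "msym Qm" using msymA unfolding Qm_def msym_def by (simp add: mid_def)

lemma peval_lin: "peval V A [:-c, 1:] = A - msc c (mid V)"
proof -
  have "peval V A [:-c, 1:] = msc (-c) (mid V) + mmul V A (msc 1 (mid V))"
    by (simp add: peval_pCons peval_const)
  also have "mmul V A (msc 1 (mid V)) = A"
    using mmul_mid_right[OF fin suppA] by (simp add: msc_def)
  finally show ?thesis by (simp add: msc_def fun_eq_iff)
qed

lemma Qm_peval: "Qm = peval V A [:-amin, 1:]" unfolding Qm_def peval_lin ..

lemma Qm_sos: "\<exists>(L::nat \<Rightarrow> 'a \<Rightarrow> real) m. \<forall>u\<in>V. \<forall>v\<in>V. Qm u v = (\<Sum>j<m. L j u * L j v)"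
  using sos_decomp[OF fin] msym_Qm Qm_psd unfolding msym_def by blast

lemma Qm_cs: "(bf V Qm x y)\<^sup>2 \<le> qf V Qm x * qf V Qm y"
proof -
  obtain L and m :: nat where L: "\<forall>u\<in>V. \<forall>v\<in>V. Qm u v = (\<Sum>j<m. L j u * L j v)"
    using Qm_sos by blast
  show ?thesis unfolding qf_bf bf_sos[OF L]
    using cauchy_schwarz_sum[of "\<lambda>j. \<Sum>u\<in>V. L j u * x u" "\<lambda>j. \<Sum>v\<in>V. L j v * y v" m]
    by (simp add: power2_eq_square)
qed

lemma root_amin:
  assumes "peval V A q = 0"
  shows "poly q amin = 0"
proof (rule ccontr)
  assume ne: "poly q amin \<noteq> 0"
  define c where "c = poly q amin"
  have "poly (q - [:c:]) amin = 0" by (simp add: c_def)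
  then have "[:-amin, 1:] dvd (q - [:c:])" by (simp only: poly_eq_0_iff_dvd)
  then obtain s where s: "q - [:c:] = [:-amin, 1:] * s" by (auto elim: dvdE)
  have "peval V A (q - [:c:]) = msc (-c) (mid V)"
    using assms by (simp add: peval_diff peval_const msc_def fun_eq_iff)
  moreover have "peval V A (q - [:c:]) = mmul V Qm (peval V A s)"
    unfolding s peval_mult[OF fin] Qm_peval ..
  ultimately have QS: "mmul V Qm (peval V A s) = msc (-c) (mid V)" by simp
  define R where "R = msc (-1/c) (peval V A s)"
  have QR: "mmul V Qm R = mid V"
    unfolding R_def mmul_msc_right QS using ne by (simp add: c_def msc_def fun_eq_iff)
  have symR: "msym R" using msym_peval[OF fin suppA msymA, of s] unfolding R_def msym_def by simp
  define K where "K = (\<Sum>u\<in>V. \<Sum>v\<in>V. \<bar>R u v\<bar>)"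
  have key: "(nsq V x)\<^sup>2 \<le> qf V Qm x * (K * nsq V x)" for x
  proof -
    have b1: "bf V Qm x (mv V R x) = nsq V x"
      by (simp add: bf_mv[OF fin] QR bf_mid[OF fin] nsq_def power2_eq_square)
    have "qf V Qm (mv V R x) = bf V Qm (mv V R x) (mv V R x)" by (simp add: qf_bf)
    also have "\<dots> = (\<Sum>u\<in>V. mv V R x u * x u)" by (simp add: bf_mv[OF fin] QR bf_mid[OF fin])
    also have "\<dots> = qf V R x"
      unfolding qf_bf bf_mv_left by (simp add: mult.commute)
    also have "\<dots> \<le> K * nsq V x" unfolding K_def using qf_abs_le[OF fin, of R x] by simp
    finally have b2: "qf V Qm (mv V R x) \<le> K * nsq V x" .
    have "(nsq V x)\<^sup>2 \<le> qf V Qm x * qf V Qm (mv V R x)" using Qm_cs[of x "mv V R x"] b1 by simp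
    also have "\<dots> \<le> qf V Qm x * (K * nsq V x)" using b2 Qm_psd[of x] by (simp add: mult_left_mono)
    finally show ?thesis .
  qed
  have Kpos: "K > 0"
  proof -
    have "(nsq V (\<lambda>w. if w = u0 then 1 else 0))\<^sup>2 \<le> qf V Qm (\<lambda>w. if w = u0 then 1 else 0) * (K * 1)"
      using key[of "\<lambda>w. if w = u0 then 1 else 0"] nsq_delta[OF fin u0V] by simp
    then have "1 \<le> qf V Qm (\<lambda>w. if w = u0 then 1 else 0) * K" using nsq_delta[OF fin u0V] by simp
    moreover have "K \<ge> 0" unfolding K_def by (intro sum_nonneg) auto
    ultimately show ?thesis by (cases "K = 0") auto
  qed
  have "(amin + 1/K) * nsq V x \<le> qf V A x" for x
  proof (cases "nsq V x = 0")
    case True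
    then show ?thesis using nsq_zero_qf[OF fin True] by simp
  next
    case False
    then have pos: "nsq V x > 0" using nsq_nonneg[of V x] by simp
    have "nsq V x * nsq V x \<le> (qf V Qm x * K) * nsq V x"
      using key[of x] by (simp add: power2_eq_square mult_ac)
    then have "nsq V x \<le> qf V Qm x * K" using pos by simp
    then have "nsq V x / K \<le> qf V Qm x" using Kpos by (simp add: field_simps)
    then show ?thesis using qf_Qm[of x] by (simp add: algebra_simps)
  qed
  then have "amin + 1/K \<in> Cset" unfolding Cset_def by blast
  then have "amin + 1/K \<le> amin" unfolding amin_def by (rule cSup_upper[OF _ Cset_bdd])
  then show False using Kpos by simp
qed

end

context hgraph
begin

lemma min_annih:
  obtains q :: "real poly" where "q \<noteq> 0" "peval V A q = 0"
    "\<And>q'. q' \<noteq> 0 \<Longrightarrow> peval V A q' = 0 \<Longrightarrow> degree q \<le> degree q'"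
proof -
  define P where "P = (\<lambda>n. \<exists>q::real poly. q \<noteq> 0 \<and> peval V A q = 0 \<and> degree q = n)"
  have ex: "\<exists>n. P n" using annihilating_poly[OF fin suppA] unfolding P_def by blast
  define n where "n = (LEAST n. P n)"
  have "P n" unfolding n_def using ex by (rule LeastI_ex)
  then obtain q where q: "q \<noteq> 0" "peval V A q = 0" "degree q = n" unfolding P_def by blast
  have "degree q \<le> degree q'" if "q' \<noteq> 0" "peval V A q' = 0" for q'
  proof -
    have "P (degree q')" unfolding P_def using that by blast
    then show ?thesis unfolding q(3) n_def by (rule Least_le)
  qed
  then show ?thesis using that q by blast
qed

lemma eigen_poly:
  obtains r :: "real poly" where "peval V A r \<noteq> 0"
    "mmul V A (peval V A r) = msc amin (peval V A r)"
proof -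
  obtain q :: "real poly" where q: "q \<noteq> 0" "peval V A q = 0"
    and qmin: "\<And>q'. q' \<noteq> 0 \<Longrightarrow> peval V A q' = 0 \<Longrightarrow> degree q \<le> degree q'"
    using min_annih by blast
  have "poly q amin = 0" using root_amin[OF q(2)] .
  then have "[:-amin, 1:] dvd q" by (simp only: poly_eq_0_iff_dvd)
  then obtain r where r: "q = [:-amin, 1:] * r" by (auto elim: dvdE)
  have r0: "r \<noteq> 0" using q(1) r by auto
  have p0: "[:-amin, 1:] \<noteq> (0::real poly)" by simp
  have "degree ([:-amin, 1:] * r) = degree [:-amin, 1:] + degree r"
    by (rule degree_mult_eq[OF p0 r0])
  then have "degree q = Suc (degree r)" unfolding r by simp
  then have Rne: "peval V A r \<noteq> 0" using qmin[OF r0] by fastforce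
  have "mmul V Qm (peval V A r) = 0"
    using q(2) unfolding r peval_mult[OF fin] Qm_peval by simp
  then have "mmul V A (peval V A r) - msc amin (peval V A r) = 0"
    unfolding Qm_def mmul_diff_left mmul_msc_left mmul_mid_left[OF fin supp_peval] .
  then show ?thesis using that Rne by simp
qed

lemma colorable: "vector_colorable V E (1 - dg / amin)"
proof -
  obtain r :: "real poly" where Rne: "peval V A r \<noteq> 0"
    and AR: "mmul V A (peval V A r) = msc amin (peval V A r)"
    using eigen_poly by blast
  define R where "R = peval V A r"
  have suppR: "supp V R" unfolding R_def by simp
  have symR: "msym R" unfolding R_def by (rule msym_peval[OF fin suppA msymA])
  define Mm where "Mm = mmul V R R"
  have Mm_peval: "Mm = peval V A (r * r)" unfolding Mm_def R_def peval_mult[OF fin] ..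
  have Mm_entry: "Mm u v = (\<Sum>w\<in>V. R w u * R w v)" if "u \<in> V" "v \<in> V" for u v
    using that symR unfolding Mm_def mmul_def msym_def by simp
  define c0 where "c0 = Mm u0 u0"
  define e0 where "e0 = Mm u0 v0"
  have diag: "Mm u u = c0" if "u \<in> V" for u
    unfolding c0_def Mm_peval using peval_diag_const[OF sg oh that u0V] .
  have edge: "Mm u v = e0" if "E u v" for u v
    unfolding e0_def Mm_peval using peval_edge_const[OF sg oh that e0] .
  have c0pos: "c0 > 0"
  proof -
    have c0sum: "c0 = (\<Sum>w\<in>V. (R w u)\<^sup>2)" if "u \<in> V" for u
      using diag[OF that] Mm_entry[OF that that] by (simp add: power2_eq_square)
    have "c0 \<ge> 0" using c0sum[OF u0V] by (simp add: sum_nonneg)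
    moreover have "c0 \<noteq> 0"
    proof
      assume "c0 = 0"
      have "R w u = 0" for w u
      proof (cases "u \<in> V \<and> w \<in> V")
        case True
        then have "(\<Sum>w\<in>V. (R w u)\<^sup>2) = 0" using c0sum \<open>c0 = 0\<close> by simp
        then show ?thesis using True fin by (simp add: sum_nonneg_eq_0_iff)
      next
        case False
        then show ?thesis using suppR unfolding supp_def by blast
      qed
      then have "R = 0" by (auto simp: fun_eq_iff)
      then show False using Rne unfolding R_def by simp
    qed
    ultimately show ?thesis by simp
  qed
  define n where "n = card V"
  have npos: "n > 0" unfolding n_def using fin u0V by (auto simp: card_gt_0_iff)
  have trace1: "(\<Sum>u\<in>V. mmul V A Mm u u) = amin * (real n * c0)"
  proof -
    have "mmul V A Mm = msc amin Mm"
      unfolding Mm_def mmul_assoc[OF fin, symmetric] using AR unfolding R_def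
      by (simp add: mmul_msc_left)
    then have "(\<Sum>u\<in>V. mmul V A Mm u u) = (\<Sum>u\<in>V. amin * c0)" using diag by simp
    then show ?thesis by (simp add: n_def)
  qed
  have trace2: "(\<Sum>u\<in>V. mmul V A Mm u u) = real n * dg * e0"
  proof -
    have "(\<Sum>u\<in>V. mmul V A Mm u u) = (\<Sum>u\<in>V. \<Sum>w\<in>V. A u w * Mm w u)"
      by (simp add: mmul_def)
    also have "\<dots> = (\<Sum>u\<in>V. \<Sum>w\<in>V. e0 * A u w)"
    proof (rule sum.cong[OF refl], rule sum.cong[OF refl])
      fix u w
      show "A u w * Mm w u = e0 * A u w"
        using edge[of w u] sg_sym[OF sg, of u w] by (auto simp: adj_def)
    qed
    also have "\<dots> = (\<Sum>u\<in>V. e0 * dg)"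
      using regularA by (simp add: sum_distrib_left[symmetric] rsum_def)
    finally show ?thesis by (simp add: n_def)
  qed
  have e0_eq: "e0 / c0 = amin / dg"
  proof -
    have "real n * dg * e0 = amin * (real n * c0)" using trace1 trace2 by simp
    then have "dg * e0 = amin * c0" using npos by simp
    then show ?thesis using c0pos dg_pos by (simp add: field_simps)
  qed
  obtain g where g: "bij_betw g {0..<n} V" using ex_bij_betw_nat_finite[OF fin] unfolding n_def by blast
  define phi where "phi = (\<lambda>u i. R (g i) u / sqrt c0)"
  have inner: "vec_inner n (phi u) (phi v) = Mm u v / c0" if "u \<in> V" "v \<in> V" for u v
  proof -
    have "vec_inner n (phi u) (phi v) = (\<Sum>i\<in>{0..<n}. R (g i) u * R (g i) v) / c0"
      unfolding vec_inner_def phi_def using c0pos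
      by (simp add: lessThan_atLeast0 sum_divide_distrib real_sqrt_mult[symmetric] power2_eq_square[symmetric]
          del: real_sqrt_mult)
    also have "(\<Sum>i\<in>{0..<n}. R (g i) u * R (g i) v) = (\<Sum>w\<in>V. R w u * R w v)"
      using sum.reindex_bij_betw[OF g, of "\<lambda>w. R w u * R w v"] by simp
    finally show ?thesis using Mm_entry[OF that] by simp
  qed
  define k where "k = 1 - dg / amin"
  have amin_neg': "amin < 0" using amin_neg by simp
  have dg_pos': "dg > 0" using dg_pos by simp
  have kgt: "k > 1" unfolding k_def using divide_pos_neg[OF dg_pos' amin_neg'] by simp
  have bound: "- 1 / (k - 1) = amin / dg" unfolding k_def using amin_neg' dg_pos' by (simp add: field_simps)
  have "vector_coloring V E k n phi"
    unfolding vector_coloring_def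
  proof (intro conjI allI impI ballI)
    fix u assume "u \<in> V"
    then show "vec_inner n (phi u) (phi u) = 1" using inner diag c0pos by simp
  next
    fix u v assume "E u v"
    then have "u \<in> V" "v \<in> V" using sg_in[OF sg] by auto
    then show "vec_inner n (phi u) (phi v) \<le> - 1 / (k - 1)"
      using inner edge[OF \<open>E u v\<close>] e0_eq bound by simp
  qed
  then show ?thesis unfolding vector_colorable_def k_def[symmetric] using kgt by blast
qed

end

lemma ident1:
  fixes a p b q al be de ep :: real
  shows "((p-a)*(q-b)) * (al * be - a*q*(de*ep)) = (a*(b-q)) * ((p*de - al)*(q*ep - be))
     + (p*b - a*q) * ((al - a*de)*(q*ep - be))
     + (q*(p-a)) * ((al - a*de)*(be - b*ep))"
  by algebra

lemma ident2:
  fixes a p b q al be de ep :: real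
  shows "((p-a)*(q-b)) * (al * be - p*b*(de*ep)) = (b*(a-p)) * ((p*de - al)*(q*ep - be))
     + (a*q - p*b) * ((p*de - al)*(be - b*ep))
     + (p*(q-b)) * ((al - a*de)*(be - b*ep))"
  by algebra

definition kron :: "'a rmat \<Rightarrow> 'b rmat \<Rightarrow> ('a \<times> 'b) rmat" where
  "kron M N = (\<lambda>p q. M (fst p) (fst q) * N (snd p) (snd q))"

lemma qf_sosT:
  assumes "\<forall>p\<in>S. \<forall>q\<in>S. M p q = (\<Sum>t\<in>T. f t p * f t q)"
  shows "qf S M z \<ge> 0"
proof -
  have "qf S M z = (\<Sum>p\<in>S. \<Sum>q\<in>S. \<Sum>t\<in>T. f t p * f t q * z p * z q)"
    unfolding qf_def using assms by (auto simp: sum_distrib_right intro!: sum.cong)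
  also have "\<dots> = (\<Sum>p\<in>S. \<Sum>t\<in>T. \<Sum>q\<in>S. f t p * f t q * z p * z q)"
    by (rule sum.cong[OF refl], rule sum.swap)
  also have "\<dots> = (\<Sum>t\<in>T. \<Sum>p\<in>S. \<Sum>q\<in>S. f t p * f t q * z p * z q)"
    by (rule sum.swap)
  also have "\<dots> = (\<Sum>t\<in>T. (\<Sum>p\<in>S. f t p * z p) * (\<Sum>q\<in>S. f t q * z q))"
    by (simp add: sum_product mult_ac)
  also have "\<dots> \<ge> 0" by (intro sum_nonneg) simp
  finally show ?thesis .
qed

lemma kron_psd:
  assumes "finite V" "finite W"
    and "\<forall>u\<in>V. \<forall>v\<in>V. X u v = X v u" "\<forall>x. qf V X x \<ge> 0"
    and "\<forall>u\<in>W. \<forall>v\<in>W. Y u v = Y v u" "\<forall>x. qf W Y x \<ge> 0"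
  shows "qf (V \<times> W) (kron X Y) z \<ge> 0"
proof -
  obtain L and m :: nat where L: "\<forall>u\<in>V. \<forall>v\<in>V. X u v = (\<Sum>j<m. L j u * L j v)"
    using sos_decomp[OF assms(1,3,4)] by blast
  obtain K and m' :: nat where K: "\<forall>u\<in>W. \<forall>v\<in>W. Y u v = (\<Sum>j<m'. K j u * K j v)"
    using sos_decomp[OF assms(2,5,6)] by blast
  define f where "f = (\<lambda>(t::nat\<times>nat) (p::'a\<times>'b). L (fst t) (fst p) * K (snd t) (snd p))"
  have "\<forall>p\<in>V\<times>W. \<forall>q\<in>V\<times>W. kron X Y p q = (\<Sum>t\<in>{..<m}\<times>{..<m'}. f t p * f t q)"
  proof (intro ballI)
    fix p q assume p: "p \<in> V \<times> W" and q: "q \<in> V \<times> W"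
    have "kron X Y p q = (\<Sum>j<m. L j (fst p) * L j (fst q)) * (\<Sum>i<m'. K i (snd p) * K i (snd q))"
      unfolding kron_def using L K p q by auto
    also have "\<dots> = (\<Sum>j<m. \<Sum>i<m'. (L j (fst p) * L j (fst q)) * (K i (snd p) * K i (snd q)))"
      by (rule sum_product)
    also have "\<dots> = (\<Sum>t\<in>{..<m}\<times>{..<m'}. f t p * f t q)"
      unfolding sum.cartesian_product f_def by (auto simp: mult_ac intro!: sum.cong)
    finally show "kron X Y p q = (\<Sum>t\<in>{..<m}\<times>{..<m'}. f t p * f t q)" .
  qed
  then show ?thesis by (rule qf_sosT)
qed

lemma qf_comb4:
  assumes "\<forall>p\<in>S. \<forall>q\<in>S. M p q = c0 * M0 p q + c1 * M1 p q + c2 * M2 p q + c3 * M3 p q"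
  shows "qf S M z = c0 * qf S M0 z + c1 * qf S M1 z + c2 * qf S M2 z + c3 * qf S M3 z"
proof -
  have "qf S M z = (\<Sum>p\<in>S. \<Sum>q\<in>S. c0 * (M0 p q * z p * z q) + c1 * (M1 p q * z p * z q)
          + c2 * (M2 p q * z p * z q) + c3 * (M3 p q * z p * z q))"
    unfolding qf_def using assms by (auto simp: algebra_simps intro!: sum.cong)
  also have "\<dots> = c0 * qf S M0 z + c1 * qf S M1 z + c2 * qf S M2 z + c3 * qf S M3 z"
    unfolding qf_def by (simp add: sum.distrib sum_distrib_left)
  finally show ?thesis .
qed

lemma mid_prod: "mid (V \<times> W) p q = mid V (fst p) (fst q) * mid W (snd p) (snd q)"
  by (cases p, cases q) (auto simp: mid_def)

lemma prod_bound:
  fixes A :: "'a rmat" and B :: "'b rmat"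
  assumes finV: "finite V" and finW: "finite W" and symA: "msym A" and symB: "msym B"
    and Al: "\<forall>x. a * nsq V x \<le> qf V A x" and Au: "\<forall>x. qf V A x \<le> p * nsq V x"
    and Bl: "\<forall>x. b * nsq W x \<le> qf W B x" and Bu: "\<forall>x. qf W B x \<le> q * nsq W x"
    and a0: "a < 0" and p0: "p > 0" and b0: "b < 0" and q0: "q > 0"
  shows "min (a * q) (p * b) * nsq (V \<times> W) z \<le> qf (V \<times> W) (kron A B) z"
proof -
  define X1 where "X1 = msc p (mid V) - A"
  define X2 where "X2 = A - msc a (mid V)"
  define Y1 where "Y1 = msc q (mid W) - B"
  define Y2 where "Y2 = B - msc b (mid W)"
  have sX1: "\<forall>u\<in>V. \<forall>v\<in>V. X1 u v = X1 v u" and sX2: "\<forall>u\<in>V. \<forall>v\<in>V. X2 u v = X2 v u"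
    using symA unfolding X1_def X2_def msym_def mid_def by auto
  have sY1: "\<forall>u\<in>W. \<forall>v\<in>W. Y1 u v = Y1 v u" and sY2: "\<forall>u\<in>W. \<forall>v\<in>W. Y2 u v = Y2 v u"
    using symB unfolding Y1_def Y2_def msym_def mid_def by auto
  have pX1: "\<forall>x. qf V X1 x \<ge> 0" using Au unfolding X1_def by (simp add: qf_diff qf_msc qf_mid[OF finV])
  have pX2: "\<forall>x. qf V X2 x \<ge> 0" using Al unfolding X2_def by (simp add: qf_diff qf_msc qf_mid[OF finV])
  have pY1: "\<forall>x. qf W Y1 x \<ge> 0" using Bu unfolding Y1_def by (simp add: qf_diff qf_msc qf_mid[OF finW])
  have pY2: "\<forall>x. qf W Y2 x \<ge> 0" using Bl unfolding Y2_def by (simp add: qf_diff qf_msc qf_mid[OF finW])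
  have P11: "qf (V\<times>W) (kron X1 Y1) z \<ge> 0" by (rule kron_psd[OF finV finW sX1 pX1 sY1 pY1])
  have P12: "qf (V\<times>W) (kron X1 Y2) z \<ge> 0" by (rule kron_psd[OF finV finW sX1 pX1 sY2 pY2])
  have P21: "qf (V\<times>W) (kron X2 Y1) z \<ge> 0" by (rule kron_psd[OF finV finW sX2 pX2 sY1 pY1])
  have P22: "qf (V\<times>W) (kron X2 Y2) z \<ge> 0" by (rule kron_psd[OF finV finW sX2 pX2 sY2 pY2])
  define D where "D = (p - a) * (q - b)"
  have Dpos: "D > 0" unfolding D_def using a0 p0 b0 q0 by simp
  have qfmid: "qf (V\<times>W) (mid (V\<times>W)) z = nsq (V\<times>W) z" by (rule qf_mid) (simp add: finV finW)
  show ?thesis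
  proof (cases "a * q \<le> p * b")
    case True
    have H: "\<forall>s\<in>V\<times>W. \<forall>t\<in>V\<times>W. D * kron A B s t = (D * (a*q)) * mid (V\<times>W) s t
       + (a*(b-q)) * kron X1 Y1 s t + (p*b - a*q) * kron X2 Y1 s t + (q*(p-a)) * kron X2 Y2 s t"
    proof (intro ballI)
      fix s t
      show "D * kron A B s t = (D * (a*q)) * mid (V\<times>W) s t
       + (a*(b-q)) * kron X1 Y1 s t + (p*b - a*q) * kron X2 Y1 s t + (q*(p-a)) * kron X2 Y2 s t"
        using ident1[of p a q b "A (fst s) (fst t)" "B (snd s) (snd t)"
            "mid V (fst s) (fst t)" "mid W (snd s) (snd t)"]
        unfolding kron_def X1_def X2_def Y1_def Y2_def D_def mid_prod
        by (simp add: algebra_simps)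
    qed
    have "qf (V\<times>W) (\<lambda>s t. D * kron A B s t) z = (D * (a*q)) * nsq (V\<times>W) z
       + (a*(b-q)) * qf (V\<times>W) (kron X1 Y1) z + (p*b - a*q) * qf (V\<times>W) (kron X2 Y1) z
       + (q*(p-a)) * qf (V\<times>W) (kron X2 Y2) z"
      using qf_comb4[OF H] qfmid by simp
    moreover have "qf (V\<times>W) (\<lambda>s t. D * kron A B s t) z = D * qf (V\<times>W) (kron A B) z"
      using qf_msc[of "V\<times>W" D "kron A B" z] by (simp add: msc_def)
    moreover have "0 \<le> (a*(b-q)) * qf (V\<times>W) (kron X1 Y1) z"
      using P11 mult_nonpos_nonpos[of a "b-q"] a0 b0 q0 by (metis mult_nonneg_nonneg mult_nonpos_nonpos less_eq_real_def diff_less_0_iff_less less_trans)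
    moreover have "0 \<le> (p*b - a*q) * qf (V\<times>W) (kron X2 Y1) z" using P21 True by simp
    moreover have "0 \<le> (q*(p-a)) * qf (V\<times>W) (kron X2 Y2) z" using P22 q0 p0 a0 by simp
    ultimately have "D * ((a*q) * nsq (V\<times>W) z) \<le> D * qf (V\<times>W) (kron A B) z"
      by (simp add: algebra_simps)
    then have "(a*q) * nsq (V\<times>W) z \<le> qf (V\<times>W) (kron A B) z" using Dpos by simp
    then show ?thesis using True by (simp add: min_def)
  next
    case False
    have H: "\<forall>s\<in>V\<times>W. \<forall>t\<in>V\<times>W. D * kron A B s t = (D * (p*b)) * mid (V\<times>W) s t
       + (b*(a-p)) * kron X1 Y1 s t + (a*q - p*b) * kron X1 Y2 s t + (p*(q-b)) * kron X2 Y2 s t"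
    proof (intro ballI)
      fix s t
      show "D * kron A B s t = (D * (p*b)) * mid (V\<times>W) s t
       + (b*(a-p)) * kron X1 Y1 s t + (a*q - p*b) * kron X1 Y2 s t + (p*(q-b)) * kron X2 Y2 s t"
        using ident2[of p a q b "A (fst s) (fst t)" "B (snd s) (snd t)"
            "mid V (fst s) (fst t)" "mid W (snd s) (snd t)"]
        unfolding kron_def X1_def X2_def Y1_def Y2_def D_def mid_prod
        by (simp add: algebra_simps)
    qed
    have "qf (V\<times>W) (\<lambda>s t. D * kron A B s t) z = (D * (p*b)) * nsq (V\<times>W) z
       + (b*(a-p)) * qf (V\<times>W) (kron X1 Y1) z + (a*q - p*b) * qf (V\<times>W) (kron X1 Y2) z
       + (p*(q-b)) * qf (V\<times>W) (kron X2 Y2) z"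
      using qf_comb4[OF H] qfmid by simp
    moreover have "qf (V\<times>W) (\<lambda>s t. D * kron A B s t) z = D * qf (V\<times>W) (kron A B) z"
      using qf_msc[of "V\<times>W" D "kron A B" z] by (simp add: msc_def)
    moreover have "0 \<le> (b*(a-p)) * qf (V\<times>W) (kron X1 Y1) z"
      using P11 mult_nonpos_nonpos[of b "a-p"] a0 b0 p0 by (metis mult_nonneg_nonneg mult_nonpos_nonpos less_eq_real_def diff_less_0_iff_less less_trans)
    moreover have "0 \<le> (a*q - p*b) * qf (V\<times>W) (kron X1 Y2) z" using P12 False by simp
    moreover have "0 \<le> (p*(q-b)) * qf (V\<times>W) (kron X2 Y2) z" using P22 q0 p0 b0 by simp
    ultimately have "D * ((p*b) * nsq (V\<times>W) z) \<le> D * qf (V\<times>W) (kron A B) z"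
      by (simp add: algebra_simps)
    then have "(p*b) * nsq (V\<times>W) z \<le> qf (V\<times>W) (kron A B) z" using Dpos by simp
    then show ?thesis using False by (simp add: min_def)
  qed
qed

lemma factor_facts:
  assumes "simple_graph V E" "one_homogeneous V E" "E u0 v0"
  shows "\<exists>a d. a < 0 \<and> d \<ge> 1 \<and> msym (adj E) \<and> (\<forall>u\<in>V. rsum V (adj E) u = d)
     \<and> (\<forall>x. a * nsq V x \<le> qf V (adj E) x) \<and> (\<forall>x. qf V (adj E) x \<le> d * nsq V x)
     \<and> vector_colorable V E (1 - d / a)"
proof -
  interpret hgraph V E u0 v0 by unfold_locales (rule assms)+
  show ?thesis
    using amin_neg dg_pos msymA regularA amin_le qf_upper colorable
    by (intro exI[of _ amin] exI[of _ dg]) auto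
qed

lemma colorable_pos: "vector_colorable V E k \<Longrightarrow> k > 1"
  unfolding vector_colorable_def by simp

lemma colorable_prod1:
  assumes "vector_colorable V E k"
  shows "vector_colorable (cat_prod_verts V W) (cat_prod_edges E F) k"
proof -
  obtain d phi where c: "vector_coloring V E k d phi" and k: "k > 1"
    using assms unfolding vector_colorable_def by blast
  have "vector_coloring (cat_prod_verts V W) (cat_prod_edges E F) k d (\<lambda>p. phi (fst p))"
    using c unfolding vector_coloring_def cat_prod_verts_def cat_prod_edges_def by auto
  then show ?thesis using k unfolding vector_colorable_def by blast
qed

lemma colorable_prod2:
  assumes "vector_colorable W F k"
  shows "vector_colorable (cat_prod_verts V W) (cat_prod_edges E F) k"
proof -
  obtain d phi where c: "vector_coloring W F k d phi" and k: "k > 1"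
    using assms unfolding vector_colorable_def by blast
  have "vector_coloring (cat_prod_verts V W) (cat_prod_edges E F) k d (\<lambda>p. phi (snd p))"
    using c unfolding vector_coloring_def cat_prod_verts_def cat_prod_edges_def by auto
  then show ?thesis using k unfolding vector_colorable_def by blast
qed

lemma rowsum_kron:
  assumes "finite V" "finite W" "\<forall>u\<in>V. rsum V A u = dA" "\<forall>v\<in>W. rsum W B v = dB" "p \<in> V \<times> W"
  shows "(\<Sum>q\<in>V\<times>W. kron A B p q) = dA * dB"
proof -
  have "(\<Sum>q\<in>V\<times>W. kron A B p q) = (\<Sum>u\<in>V. \<Sum>v\<in>W. A (fst p) u * B (snd p) v)"
    unfolding kron_def sum.cartesian_product by (simp add: case_prod_beta)
  also have "\<dots> = rsum V A (fst p) * rsum W B (snd p)"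
    unfolding rsum_def by (simp add: sum_product)
  finally show ?thesis using assms(3,4,5) by auto
qed

lemma prod_lower:
  assumes sgG: "simple_graph V E" and sgH: "simple_graph W F"
    and aG: "aG < 0" and dG: "dG \<ge> 1" and symG: "msym (adj E)" and rG: "\<forall>u\<in>V. rsum V (adj E) u = dG"
    and lG: "\<forall>x. aG * nsq V x \<le> qf V (adj E) x" and uG: "\<forall>x. qf V (adj E) x \<le> dG * nsq V x"
    and aH: "aH < 0" and dH: "dH \<ge> 1" and symH: "msym (adj F)" and rH: "\<forall>u\<in>W. rsum W (adj F) u = dH"
    and lH: "\<forall>x. aH * nsq W x \<le> qf W (adj F) x" and uH: "\<forall>x. qf W (adj F) x \<le> dH * nsq W x"
    and ne: "V \<times> W \<noteq> {}"
    and col: "vector_colorable (cat_prod_verts V W) (cat_prod_edges E F) k"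
  shows "min (1 - dG / aG) (1 - dH / aH) \<le> k"
proof -
  have finV: "finite V" using sgG by (rule sg_finite)
  have finW: "finite W" using sgH by (rule sg_finite)
  obtain n psi where c: "vector_coloring (cat_prod_verts V W) (cat_prod_edges E F) k n psi"
    and k1: "k > 1" using col unfolding vector_colorable_def by blast
  have norm1: "vec_inner n (psi p) (psi p) = 1" if "p \<in> V \<times> W" for p
    using c that unfolding vector_coloring_def cat_prod_verts_def by blast
  have edgeb: "vec_inner n (psi p) (psi q) \<le> - 1 / (k - 1)" if "cat_prod_edges E F p q" for p q
    using c that unfolding vector_coloring_def by blast
  define AX where "AX = kron (adj E) (adj F)"
  define mu where "mu = min (aG * dH) (dG * aH)"
  define N where "N = real (card (V \<times> W))"
  have Npos: "N > 0" unfolding N_def using ne finV finW by (simp add: card_gt_0_iff)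
  have bound_i: "mu * nsq (V\<times>W) (\<lambda>p. psi p i) \<le> qf (V\<times>W) AX (\<lambda>p. psi p i)" for i
    unfolding mu_def AX_def
    by (rule prod_bound[OF finV finW symG symH lG uG lH uH aG _ aH]) (use dG dH in auto)
  have sum_nsq: "(\<Sum>i<n. nsq (V\<times>W) (\<lambda>p. psi p i)) = N"
  proof -
    have "(\<Sum>i<n. nsq (V\<times>W) (\<lambda>p. psi p i)) = (\<Sum>p\<in>V\<times>W. \<Sum>i<n. psi p i * psi p i)"
      unfolding nsq_def power2_eq_square by (rule sum.swap)
    also have "\<dots> = (\<Sum>p\<in>V\<times>W. 1)"
      using norm1 unfolding vec_inner_def by (intro sum.cong) auto
    finally show ?thesis by (simp add: N_def)
  qed
  have sum_qf: "(\<Sum>i<n. qf (V\<times>W) AX (\<lambda>p. psi p i))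
       = (\<Sum>p\<in>V\<times>W. \<Sum>q\<in>V\<times>W. AX p q * vec_inner n (psi p) (psi q))"
  proof -
    have "(\<Sum>i<n. qf (V\<times>W) AX (\<lambda>p. psi p i))
        = (\<Sum>i<n. \<Sum>p\<in>V\<times>W. \<Sum>q\<in>V\<times>W. AX p q * psi p i * psi q i)" unfolding qf_def ..
    also have "\<dots> = (\<Sum>p\<in>V\<times>W. \<Sum>i<n. \<Sum>q\<in>V\<times>W. AX p q * psi p i * psi q i)"
      by (rule sum.swap)
    also have "\<dots> = (\<Sum>p\<in>V\<times>W. \<Sum>q\<in>V\<times>W. \<Sum>i<n. AX p q * psi p i * psi q i)"
      by (rule sum.cong[OF refl], rule sum.swap)
    also have "\<dots> = (\<Sum>p\<in>V\<times>W. \<Sum>q\<in>V\<times>W. AX p q * vec_inner n (psi p) (psi q))"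
      unfolding vec_inner_def by (simp add: sum_distrib_left mult.assoc)
    finally show ?thesis .
  qed
  have AX01: "AX p q * vec_inner n (psi p) (psi q) \<le> AX p q * (- 1 / (k - 1))" for p q
  proof (cases "cat_prod_edges E F p q")
    case True
    then have "AX p q = 1" unfolding AX_def kron_def adj_def cat_prod_edges_def by simp
    then show ?thesis using edgeb[OF True] by simp
  next
    case False
    then have "AX p q = 0" unfolding AX_def kron_def adj_def cat_prod_edges_def by auto
    then show ?thesis by simp
  qed
  have "(\<Sum>p\<in>V\<times>W. \<Sum>q\<in>V\<times>W. AX p q * vec_inner n (psi p) (psi q))
      \<le> (\<Sum>p\<in>V\<times>W. \<Sum>q\<in>V\<times>W. AX p q * (- 1 / (k - 1)))"
    by (intro sum_mono AX01)
  also have "\<dots> = (\<Sum>p\<in>V\<times>W. (dG * dH) * (- 1 / (k - 1)))"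
  proof (rule sum.cong[OF refl])
    fix p assume p: "p \<in> V \<times> W"
    have "(\<Sum>q\<in>V\<times>W. AX p q * (- 1 / (k - 1))) = (\<Sum>q\<in>V\<times>W. AX p q) * (- 1 / (k - 1))"
      by (rule sum_distrib_right[symmetric])
    then show "(\<Sum>q\<in>V\<times>W. AX p q * (- 1 / (k - 1))) = (dG * dH) * (- 1 / (k - 1))"
      using rowsum_kron[OF finV finW rG rH p] unfolding AX_def by simp
  qed
  also have "\<dots> = N * (dG * dH) * (- 1 / (k - 1))" by (simp add: N_def)
  finally have up: "(\<Sum>i<n. qf (V\<times>W) AX (\<lambda>p. psi p i)) \<le> N * (dG * dH) * (- 1 / (k - 1))"
    using sum_qf by simp
  have "mu * N \<le> (\<Sum>i<n. qf (V\<times>W) AX (\<lambda>p. psi p i))"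
    using sum_mono[of "{..<n}" "\<lambda>i. mu * nsq (V\<times>W) (\<lambda>p. psi p i)", OF bound_i]
    by (simp add: sum_distrib_left[symmetric] sum_nsq)
  with up have "mu * N \<le> N * (dG * dH) * (- 1 / (k - 1))" by linarith
  then have "N * mu \<le> N * ((dG * dH) * (- 1 / (k - 1)))" by (simp add: mult_ac)
  then have mub: "mu \<le> (dG * dH) * (- 1 / (k - 1))" using Npos by (rule mult_left_le_imp_le)
  have "mu * (k - 1) \<le> ((dG * dH) * (- 1 / (k - 1))) * (k - 1)"
    using mub k1 by (intro mult_right_mono) auto
  then have mub2: "mu * (k - 1) \<le> - (dG * dH)" using k1 by simp
  show ?thesis
  proof (cases "aG * dH \<le> dG * aH")
    case True
    then have "aG * dH * (k - 1) \<le> - (dG * dH)" using mub2 by (simp add: mu_def min_def)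
    then have "dH * (aG * (k - 1)) \<le> dH * (- dG)" by (simp add: algebra_simps)
    then have "aG * (k - 1) \<le> - dG" using dH mult_left_le_imp_le[of dH "aG * (k - 1)" "- dG"] by linarith
    then have "1 - dG / aG \<le> k" using aG by (simp add: field_simps)
    then show ?thesis by simp
  next
    case False
    then have "dG * aH * (k - 1) \<le> - (dG * dH)" using mub2 by (simp add: mu_def min_def)
    then have "dG * (aH * (k - 1)) \<le> dG * (- dH)" by (simp add: algebra_simps)
    then have "aH * (k - 1) \<le> - dH" using dG mult_left_le_imp_le[of dG "aH * (k - 1)" "- dH"] by linarith
    then have "1 - dH / aH \<le> k" using aH by (simp add: field_simps)
    then show ?thesis by simp
  qed
qed

lemma chi_ge1:
  assumes "simple_graph V E" "one_homogeneous V E"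
  shows "chi_vec V E \<ge> 1"
proof (cases "\<exists>u v. E u v")
  case False
  then show ?thesis unfolding chi_vec_def by simp
next
  case True
  then obtain u0 v0 where e: "E u0 v0" by blast
  obtain a d where "vector_colorable V E (1 - d / a)"
    using factor_facts[OF assms e] by blast
  then have ne: "{k. vector_colorable V E k} \<noteq> {}" by blast
  have "1 \<le> Inf {k. vector_colorable V E k}"
    by (rule cInf_greatest[OF ne]) (auto dest: colorable_pos)
  then show ?thesis using True unfolding chi_vec_def by simp
qed

theorem theorem5p5:
  fixes V :: "'a set" and E :: "'a \<Rightarrow> 'a \<Rightarrow> bool"
    and W :: "'b set" and F :: "'b \<Rightarrow> 'b \<Rightarrow> bool"
  assumes "simple_graph V E" and "simple_graph W F"
    and "one_homogeneous V E" and "one_homogeneous W F"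
  shows "chi_vec (cat_prod_verts V W) (cat_prod_edges E F) = min (chi_vec V E) (chi_vec W F)"
proof (cases "(\<exists>u v. E u v) \<and> (\<exists>u v. F u v)")
  case False
  then have noX: "\<not> (\<exists>p q. cat_prod_edges E F p q)" unfolding cat_prod_edges_def by auto
  have X1: "chi_vec (cat_prod_verts V W) (cat_prod_edges E F) = 1"
    using noX unfolding chi_vec_def by simp
  have "chi_vec V E = 1 \<or> chi_vec W F = 1" using False unfolding chi_vec_def by auto
  then show ?thesis using X1 chi_ge1[OF assms(1,3)] chi_ge1[OF assms(2,4)] by (auto simp: min_def)
next
  case True
  then obtain u0 v0 w0 x0 where eG: "E u0 v0" and eH: "F w0 x0" by blast
  obtain aG dG where G: "aG < 0" "dG \<ge> 1" "msym (adj E)" "\<forall>u\<in>V. rsum V (adj E) u = dG"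
     "\<forall>x. aG * nsq V x \<le> qf V (adj E) x" "\<forall>x. qf V (adj E) x \<le> dG * nsq V x"
     "vector_colorable V E (1 - dG / aG)"
    using factor_facts[OF assms(1,3) eG] by blast
  obtain aH dH where H: "aH < 0" "dH \<ge> 1" "msym (adj F)" "\<forall>u\<in>W. rsum W (adj F) u = dH"
     "\<forall>x. aH * nsq W x \<le> qf W (adj F) x" "\<forall>x. qf W (adj F) x \<le> dH * nsq W x"
     "vector_colorable W F (1 - dH / aH)"
    using factor_facts[OF assms(2,4) eH] by blast
  define SG where "SG = {k. vector_colorable V E k}"
  define SH where "SH = {k. vector_colorable W F k}"
  define SX where "SX = {k. vector_colorable (cat_prod_verts V W) (cat_prod_edges E F) k}"
  have eX: "cat_prod_edges E F (u0, w0) (v0, x0)" using eG eH unfolding cat_prod_edges_def by simp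
  have chiG: "chi_vec V E = Inf SG" using eG unfolding chi_vec_def SG_def by auto
  have chiH: "chi_vec W F = Inf SH" using eH unfolding chi_vec_def SH_def by auto
  have chiX: "chi_vec (cat_prod_verts V W) (cat_prod_edges E F) = Inf SX"
    using eX unfolding chi_vec_def SX_def by auto
  have kG: "1 - dG / aG \<in> SG" using G(7) unfolding SG_def by simp
  have kH: "1 - dH / aH \<in> SH" using H(7) unfolding SH_def by simp
  have bddG: "bdd_below SG"
  proof -
    have "\<forall>x\<in>SG. 1 \<le> x" unfolding SG_def using colorable_pos by (auto intro: less_imp_le)
    then show ?thesis unfolding bdd_below_def by blast
  qed
  have bddH: "bdd_below SH"
  proof -
    have "\<forall>x\<in>SH. 1 \<le> x" unfolding SH_def using colorable_pos by (auto intro: less_imp_le)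
    then show ?thesis unfolding bdd_below_def by blast
  qed
  have bddX: "bdd_below SX"
  proof -
    have "\<forall>x\<in>SX. 1 \<le> x" unfolding SX_def using colorable_pos by (auto intro: less_imp_le)
    then show ?thesis unfolding bdd_below_def by blast
  qed
  have subG: "SG \<subseteq> SX" unfolding SG_def SX_def using colorable_prod1 by blast
  have subH: "SH \<subseteq> SX" unfolding SH_def SX_def using colorable_prod2 by blast
  have le1: "Inf SX \<le> Inf SG" by (rule cInf_superset_mono) (use kG bddX subG in auto)
  have le2: "Inf SX \<le> Inf SH" by (rule cInf_superset_mono) (use kH bddX subH in auto)
  have cG: "Inf SG \<le> 1 - dG / aG" by (rule cInf_lower[OF kG bddG])
  have cH: "Inf SH \<le> 1 - dH / aH" by (rule cInf_lower[OF kH bddH])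
  have neV: "V \<times> W \<noteq> {}" using sg_in[OF assms(1) eG] sg_in[OF assms(2) eH] by auto
  have ge: "min (Inf SG) (Inf SH) \<le> Inf SX"
  proof (rule cInf_greatest)
    show "SX \<noteq> {}" using kG subG by blast
  next
    fix k assume "k \<in> SX"
    then have "min (1 - dG / aG) (1 - dH / aH) \<le> k"
      unfolding SX_def using prod_lower[OF assms(1,2) G(1-6) H(1-6) neV] by blast
    then show "min (Inf SG) (Inf SH) \<le> k" using cG cH by linarith
  qed
  show ?thesis unfolding chiG chiH chiX using le1 le2 ge by linarith
qed

end
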